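(* Let $\Sigma\subset\mathbb{Q}^{n_1}_{\epsilon_1}\times\mathbb{Q}^{n_2}_{\epsilon_2}$ be an $(f_s^1,f_s^2,\phi)$-hypersurface with constant mean curvature. Then both families $\{f_s^1\}$ and $\{f_s^2\}$ are isoparametric, i.e., for each $s$ the hypersurface $f^i_s$ has constant mean curvature.
   Context: $\mathbb{Q}^m_\epsilon$ is the simply connected space form of dimension $m\ge2$ and curvature $\epsilon$, and the product carries the product metric. $(f_s^1,f_s^2,\phi)$-hypersurface: given hypersurfaces $M_i^{n_i-1}\subset\mathbb{Q}^{n_i}_{\epsilon_i}$ with unit normals $\eta$, an open interval $I$ and a diffeomorphism $\phi:I\to\phi(I)$, it is the image of the immersion $\Phi(p_1,p_2,s)=(\exp_{p_1}(s\eta_{p_1}),\exp_{p_2}(\phi(s)\eta_{p_2}))$ on $M_1\times M_2\times I$; $f^1_s(p_1)=\exp_{p_1}(s\eta_{p_1})$ and $f^2_s(p_2)=\exp_{p_2}(\phi(s)\eta_{p_2})$ are families of parallel hypersurfaces of the factors. Its mean curvature (sum of principal curvatures) is $H_\Sigma=\frac{\phi''}{W^3}-\frac{\phi'}{W}H_1^s(p_1)+\frac1W H_2^s(p_2)$, $W=\sqrt{1+\phi'^2}$, with $H_i^s$ the mean curvature of $f_s^i$. *)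

theory Defs
  imports "HOL-Analysis.Analysis"
begin

text \<open>Model of the space form Q^n_eps inside R^(n+1) = 'b \<times> real, where DIM('b) = n.
  The ambient bilinear form is x\<bullet>y + sgn(eps) t r (Euclidean for eps \<ge> 0,
  Lorentzian for eps < 0).\<close>

definition qform :: "real \<Rightarrow> ('b::euclidean_space \<times> real) \<Rightarrow> ('b \<times> real) \<Rightarrow> real" where
  "qform eps p q = fst p \<bullet> fst q + sgn eps * (snd p * snd q)"

definition Qspace :: "real \<Rightarrow> ('b::euclidean_space \<times> real) set" where
  "Qspace eps =
     (if eps > 0 then {p. qform eps p p = 1 / eps}
      else if eps < 0 then {p. qform eps p p = 1 / eps \<and> snd p > 0}
      else {p. snd p = 0})"

definition Qtangent :: "real \<Rightarrow> ('b::euclidean_space \<times> real) \<Rightarrow> ('b \<times> real) set" where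
  "Qtangent eps p = (if eps = 0 then {v. snd v = 0} else {v. qform eps p v = 0})"

text \<open>Generalized trigonometric functions: exp_p(s\<eta>) = cs eps s p + sn eps s \<eta> for unit \<eta>.\<close>
definition cs :: "real \<Rightarrow> real \<Rightarrow> real" where
  "cs eps s = (if eps > 0 then cos (sqrt eps * s)
               else if eps < 0 then cosh (sqrt (- eps) * s) else 1)"

definition sn :: "real \<Rightarrow> real \<Rightarrow> real" where
  "sn eps s = (if eps > 0 then sin (sqrt eps * s) / sqrt eps
               else if eps < 0 then sinh (sqrt (- eps) * s) / sqrt (- eps) else s)"

definition parallel :: "real \<Rightarrow> ('c \<Rightarrow> 'b::euclidean_space \<times> real) \<Rightarrow> ('c \<Rightarrow> 'b \<times> real)
                        \<Rightarrow> real \<Rightarrow> 'c \<Rightarrow> 'b \<times> real" where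
  "parallel eps X \<eta> s u = cs eps s *\<^sub>R X u + sn eps s *\<^sub>R \<eta> u"

definition pform :: "real \<Rightarrow> real \<Rightarrow> (('b1::euclidean_space \<times> real) \<times> ('b2::euclidean_space \<times> real))
                     \<Rightarrow> (('b1 \<times> real) \<times> ('b2 \<times> real)) \<Rightarrow> real" where
  "pform e1 e2 p q = qform e1 (fst p) (fst q) + qform e2 (snd p) (snd q)"

definition Ptangent :: "real \<Rightarrow> real \<Rightarrow> (('b1::euclidean_space \<times> real) \<times> ('b2::euclidean_space \<times> real))
                        \<Rightarrow> (('b1 \<times> real) \<times> ('b2 \<times> real)) set" where
  "Ptangent e1 e2 p = Qtangent e1 (fst p) \<times> Qtangent e2 (snd p)"

definition C1_on :: "'a::euclidean_space set \<Rightarrow> ('a \<Rightarrow> 'e::real_normed_vector) \<Rightarrow> bool" where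
  "C1_on U F \<longleftrightarrow> (\<forall>u\<in>U. F differentiable (at u)) \<and>
      (\<forall>b\<in>Basis. continuous_on U (\<lambda>u. frechet_derivative F (at u) b))"

definition hypersurface ::
  "('e \<Rightarrow> 'e \<Rightarrow> real) \<Rightarrow> 'e set \<Rightarrow> ('e \<Rightarrow> 'e set) \<Rightarrow> ('a::euclidean_space \<Rightarrow> 'e::euclidean_space)
   \<Rightarrow> ('a \<Rightarrow> 'e) \<Rightarrow> 'a set \<Rightarrow> bool" where
  "hypersurface g A T F \<nu> U \<longleftrightarrow>
     open U \<and> connected U \<and> U \<noteq> {} \<and> C1_on U F \<and> C1_on U \<nu> \<and>
     (\<forall>u\<in>U. F u \<in> A \<and> inj (frechet_derivative F (at u)) \<and>
        (\<forall>w. frechet_derivative F (at u) w \<in> T (F u)) \<and>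
        \<nu> u \<in> T (F u) \<and> g (\<nu> u) (\<nu> u) = 1 \<and>
        (\<forall>w. g (\<nu> u) (frechet_derivative F (at u) w) = 0))"

text \<open>Mean curvature (trace of the shape operator A = -d\<nu>) computed in a frame
  W of the parameter space which is orthonormal for the induced metric.\<close>
definition mean_curv ::
  "('e \<Rightarrow> 'e \<Rightarrow> real) \<Rightarrow> ('a::euclidean_space \<Rightarrow> 'e::euclidean_space) \<Rightarrow> ('a \<Rightarrow> 'e) \<Rightarrow> 'a \<Rightarrow> real" where
  "mean_curv g F \<nu> u =
     (let W = (SOME W :: 'a \<Rightarrow> 'a. \<forall>b\<in>Basis. \<forall>b'\<in>Basis.
                 g (frechet_derivative F (at u) (W b)) (frechet_derivative F (at u) (W b'))
                   = (if b = b' then 1 else 0))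
      in - (\<Sum>b\<in>Basis. g (frechet_derivative \<nu> (at u) (W b)) (frechet_derivative F (at u) (W b))))"

definition cmc ::
  "('e \<Rightarrow> 'e \<Rightarrow> real) \<Rightarrow> 'e set \<Rightarrow> ('e \<Rightarrow> 'e set) \<Rightarrow> ('a::euclidean_space \<Rightarrow> 'e::euclidean_space)
   \<Rightarrow> 'a set \<Rightarrow> bool" where
  "cmc g A T F U \<longleftrightarrow>
     (\<exists>\<nu>. hypersurface g A T F \<nu> U \<and> (\<exists>c. \<forall>u\<in>U. mean_curv g F \<nu> u = c))"

definition diffeo_on :: "real set \<Rightarrow> (real \<Rightarrow> real) \<Rightarrow> bool" where
  "diffeo_on I \<phi> \<longleftrightarrow> inj_on \<phi> I \<and> open (\<phi> ` I) \<and>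
     (\<forall>s\<in>I. \<phi> differentiable (at s)) \<and>
     (\<forall>t\<in>\<phi> ` I. the_inv_into I \<phi> differentiable (at t))"

definition fphi_map ::
  "real \<Rightarrow> real \<Rightarrow> ('c1 \<Rightarrow> 'b1::euclidean_space \<times> real) \<Rightarrow> ('c1 \<Rightarrow> 'b1 \<times> real)
   \<Rightarrow> ('c2 \<Rightarrow> 'b2::euclidean_space \<times> real) \<Rightarrow> ('c2 \<Rightarrow> 'b2 \<times> real) \<Rightarrow> (real \<Rightarrow> real)
   \<Rightarrow> ('c1 \<times> 'c2) \<times> real \<Rightarrow> ('b1 \<times> real) \<times> ('b2 \<times> real)" where
  "fphi_map e1 e2 X1 \<eta>1 X2 \<eta>2 \<phi> x =
     (parallel e1 X1 \<eta>1 (snd x) (fst (fst x)), parallel e2 X2 \<eta>2 (\<phi> (snd x)) (snd (fst x)))"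

end

theory Submission
  imports Defs
begin
lemma qform_bilinear: "bilinear (qform e)"
  unfolding bilinear_def qform_def
  by (auto intro!: linearI simp: inner_add_left inner_add_right algebra_simps)

lemma qform_sym: "qform e p q = qform e q p"
  by (simp add: qform_def inner_commute mult.commute)

lemma qform_bb: "bounded_bilinear (qform e)"
  using bilinear_conv_bounded_bilinear qform_bilinear by blast

lemma qform_linear_left: "linear (\<lambda>x. qform e x y)"
  using qform_bilinear unfolding bilinear_def by blast
lemma qform_linear_right: "linear (\<lambda>y. qform e x y)"
  using qform_bilinear unfolding bilinear_def by blast

lemma qform_add_left: "qform e (a + b) c = qform e a c + qform e b c"
  and qform_add_right: "qform e c (a + b) = qform e c a + qform e c b"
  and qform_scaleR_left: "qform e (r *\<^sub>R a) c = r * qform e a c"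
  and qform_scaleR_right: "qform e c (r *\<^sub>R a) = r * qform e c a"
  and qform_diff_left: "qform e (a - b) c = qform e a c - qform e b c"
  and qform_diff_right: "qform e c (a - b) = qform e c a - qform e c b"
  and qform_zero_left: "qform e 0 c = 0"
  and qform_zero_right: "qform e c 0 = 0"
  by (auto simp: qform_def inner_add_left inner_add_right inner_diff_left inner_diff_right algebra_simps)

lemmas qform_simps = qform_add_left qform_add_right qform_scaleR_left qform_scaleR_right
  qform_diff_left qform_diff_right qform_zero_left qform_zero_right

lemma qform_pos:
  fixes p v :: "'b::euclidean_space \<times> real"
  assumes "p \<in> Qspace e" "v \<in> Qtangent e p" "v \<noteq> 0"
  shows "qform e v v > 0"
proof -
  obtain x t where p: "p = (x,t)" by (cases p)
  obtain y r where v: "v = (y,r)" by (cases v)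
  consider "e > 0" | "e = 0" | "e < 0" by linarith
  then show ?thesis
  proof cases
    case 1
    have "y \<noteq> 0 \<or> r \<noteq> 0" using assms(3) v by (auto simp: zero_prod_def)
    then have "y \<bullet> y + r * r > 0"
      by (metis add_nonneg_pos add_pos_nonneg inner_gt_zero_iff inner_ge_zero
          not_real_square_gt_zero zero_le_square)
    then show ?thesis using 1 by (simp add: qform_def v)
  next
    case 2
    then have "r = 0" using assms(2) v by (simp add: Qtangent_def)
    then have "y \<noteq> 0" using assms(3) v by (auto simp: zero_prod_def)
    then show ?thesis using 2 by (simp add: qform_def v)
  next
    case 3
    have hp: "x \<bullet> x - t * t = 1 / e" "t > 0" using assms(1) 3 by (auto simp: Qspace_def qform_def p)
    have hv: "x \<bullet> y - t * r = 0" using assms(2) 3 by (simp add: Qtangent_def qform_def p v)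
    have "1 / e < 0" using 3 by simp
    then have xt: "x \<bullet> x < t * t" using hp by linarith
    have "y \<noteq> 0"
    proof
      assume "y = 0"
      then have "t * r = 0" using hv by simp
      then have "r = 0" using hp by simp
      then show False using assms(3) v \<open>y = 0\<close> by (simp add: zero_prod_def)
    qed
    then have yy: "y \<bullet> y > 0" by simp
    have cs: "(x \<bullet> y) ^ 2 \<le> (x \<bullet> x) * (y \<bullet> y)" using Cauchy_Schwarz_ineq by blast
    have "(t * r) ^ 2 < (t * t) * (y \<bullet> y)"
      using cs hv mult_strict_right_mono[OF xt yy] by (simp add: algebra_simps)
    then have "(t*t) * (r * r) < (t * t) * (y \<bullet> y)" by (simp add: power2_eq_square algebra_simps)
    then have "r * r < y \<bullet> y" using hp(2) by (simp add: mult_less_cancel_left)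
    then show ?thesis using 3 by (simp add: qform_def v)
  qed
qed

definition dcs :: "real \<Rightarrow> real \<Rightarrow> real" where
  "dcs eps s = (if eps > 0 then - sqrt eps * sin (sqrt eps * s)
               else if eps < 0 then sqrt (- eps) * sinh (sqrt (- eps) * s) else 0)"

definition dsn :: "real \<Rightarrow> real \<Rightarrow> real" where
  "dsn eps s = (if eps > 0 then cos (sqrt eps * s)
               else if eps < 0 then cosh (sqrt (- eps) * s) else 1)"

lemma sqrt_neg_aux1: "e < 0 \<Longrightarrow> - (c * sqrt (- e) * sqrt (- e) / e) = (c::real)"
proof -
  assume "e < 0"
  define r where "r = sqrt (- e)"
  have h: "e = - (r * r)" "r > 0" using \<open>e < 0\<close> by (simp_all add: r_def)
  show ?thesis unfolding r_def[symmetric] h(1) using h(2) by (simp add: field_simps)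
qed
lemma sqrt_neg_aux2: "e < 0 \<Longrightarrow> c * sqrt (- e) = - (e * c / sqrt (- e))"
proof -
  assume "e < 0"
  define r where "r = sqrt (- e)"
  have h: "e = - (r * r)" "r > 0" using \<open>e < 0\<close> by (simp_all add: r_def)
  show ?thesis unfolding r_def[symmetric] h(1) using h(2) by (simp add: field_simps)
qed

lemma cs_deriv: "(cs e has_real_derivative dcs e s) (at s)"
proof -
  consider "e > 0" | "e = 0" | "e < 0" by linarith
  then show ?thesis
  proof cases
    case 1
    then have "cs e = (\<lambda>s. cos (sqrt e * s))" by (auto simp: cs_def)
    then show ?thesis using 1 by (auto simp: dcs_def intro!: derivative_eq_intros)
  next
    case 2
    then have "cs e = (\<lambda>s. 1)" by (auto simp: cs_def)
    then show ?thesis using 2 by (auto simp: dcs_def intro!: derivative_eq_intros)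
  next
    case 3
    then have "cs e = (\<lambda>s. cosh (sqrt (-e) * s))" by (auto simp: cs_def)
    then show ?thesis using 3 by (auto simp: dcs_def intro!: derivative_eq_intros)
  qed
qed

lemma sn_deriv: "(sn e has_real_derivative dsn e s) (at s)"
proof -
  consider "e > 0" | "e = 0" | "e < 0" by linarith
  then show ?thesis
  proof cases
    case 1
    then have "sn e = (\<lambda>s. sin (sqrt e * s) / sqrt e)" by (auto simp: sn_def)
    then show ?thesis using 1 by (auto simp: dsn_def intro!: derivative_eq_intros) (simp add: mult.assoc)
  next
    case 2
    then have "sn e = (\<lambda>s. s)" by (auto simp: sn_def)
    then show ?thesis using 2 by (auto simp: dsn_def intro!: derivative_eq_intros)
  next
    case 3
    then have "sn e = (\<lambda>s. sinh (sqrt (-e) * s) / sqrt (-e))" by (auto simp: sn_def)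
    then show ?thesis using 3 by (auto simp: dsn_def intro!: derivative_eq_intros)
       (rule sqrt_neg_aux1[OF 3])
  qed
qed

lemma dcs_deriv: "(dcs e has_real_derivative (- e * cs e s)) (at s)"
proof -
  consider "e > 0" | "e = 0" | "e < 0" by linarith
  then show ?thesis
  proof cases
    case 1
    then have "dcs e = (\<lambda>s. - sqrt e * sin (sqrt e * s))" by (auto simp: dcs_def)
    then show ?thesis using 1 by (auto simp: cs_def intro!: derivative_eq_intros)
  next
    case 2
    then have "dcs e = (\<lambda>s. 0)" by (auto simp: dcs_def)
    then show ?thesis using 2 by (auto simp: cs_def intro!: derivative_eq_intros)
  next
    case 3
    then have "dcs e = (\<lambda>s. sqrt (-e) * sinh (sqrt (-e) * s))" by (auto simp: dcs_def)
    then show ?thesis using 3 by (auto simp: cs_def intro!: derivative_eq_intros) (simp add: mult.assoc)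
  qed
qed

lemma dsn_deriv: "(dsn e has_real_derivative (- e * sn e s)) (at s)"
proof -
  consider "e > 0" | "e = 0" | "e < 0" by linarith
  then show ?thesis
  proof cases
    case 1
    then have "dsn e = (\<lambda>s. cos (sqrt e * s))" by (auto simp: dsn_def)
    moreover have "sqrt e * sqrt e = e" using 1 by simp
    ultimately show ?thesis using 1
      by (auto simp: sn_def intro!: derivative_eq_intros) (simp add: field_simps)
  next
    case 2
    then have "dsn e = (\<lambda>s. 1)" by (auto simp: dsn_def)
    then show ?thesis using 2 by (auto simp: sn_def intro!: derivative_eq_intros)
  next
    case 3
    then have "dsn e = (\<lambda>s. cosh (sqrt (-e) * s))" by (auto simp: dsn_def)
    moreover have "sqrt (-e) * sqrt (-e) = -e" using 3 by simp
    ultimately show ?thesis using 3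
      by (auto simp: sn_def intro!: derivative_eq_intros)
        (rule sqrt_neg_aux2[OF 3])
  qed
qed

lemma dcs_zero: "dcs 0 s = 0" and dsn_zero: "dsn 0 s = 1" and cs_zero: "cs 0 s = 1" and sn_zero: "sn 0 s = s"
  by (auto simp: dcs_def dsn_def cs_def sn_def)

lemma trig_id_N: "e \<noteq> 0 \<Longrightarrow> dcs e s * dcs e s / e + dsn e s * dsn e s = 1"
proof -
  assume e: "e \<noteq> 0"
  consider "e > 0" | "e < 0" using e by linarith
  then show ?thesis
  proof cases
    case 1
    have "sqrt e * sqrt e = e" using 1 by simp
    then have "dcs e s * dcs e s / e = (sin (sqrt e * s))^2"
      using 1 by (simp add: dcs_def power2_eq_square field_simps)
    moreover have "dsn e s * dsn e s = (cos (sqrt e * s))^2" using 1 by (simp add: dsn_def power2_eq_square)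
    ultimately show ?thesis by simp
  next
    case 2
    define r where "r = sqrt (- e)"
    have h: "e = - (r * r)" "r > 0" using 2 by (simp_all add: r_def)
    have d: "dcs e s = r * sinh (r * s)" "dsn e s = cosh (r * s)" using 2 by (simp_all add: dcs_def dsn_def r_def)
    have "cosh (r * s) ^ 2 - sinh (r * s) ^ 2 = 1" by (simp add: cosh_square_eq)
    then show ?thesis unfolding d using h by (simp add: field_simps power2_eq_square)
  qed
qed

definition ONsys :: "('a \<Rightarrow> 'a \<Rightarrow> real) \<Rightarrow> 'a set \<Rightarrow> bool" where
  "ONsys G T \<longleftrightarrow> (\<forall>x\<in>T. \<forall>y\<in>T. G x y = (if x = y then 1 else 0))"

lemma on_independent:
  fixes G :: "'a::euclidean_space \<Rightarrow> 'a \<Rightarrow> real"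
  assumes lin: "\<And>y. linear (\<lambda>x. G x y)" and on: "ONsys G T" and fin: "finite T"
  shows "independent T"
  unfolding independent_explicit
proof (intro conjI allI impI ballI)
  show "finite T" by fact
  fix c v assume s: "(\<Sum>v\<in>T. c v *\<^sub>R v) = 0" and v: "v \<in> T"
  have "0 = G (\<Sum>w\<in>T. c w *\<^sub>R w) v" using s by (simp add: linear_0[OF lin[of v]])
  also have "\<dots> = (\<Sum>w\<in>T. c w * G w v)"
    by (simp add: linear_sum[OF lin[of v]] linear_scale[OF lin[of v]])
  also have "\<dots> = (\<Sum>w\<in>T. if w = v then c w else 0)"
    using on v unfolding ONsys_def by (intro sum.cong) auto
  also have "\<dots> = c v" using v fin by simp
  finally show "c v = 0" by simp
qed

lemma gram_schmidt_exists:
  fixes G :: "'a::euclidean_space \<Rightarrow> 'a \<Rightarrow> real"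
  assumes bil: "bilinear G" and sym: "\<And>x y. G x y = G y x" and pos: "\<And>x. x \<noteq> 0 \<Longrightarrow> G x x > 0"
  shows "\<exists>W :: 'a \<Rightarrow> 'a. \<forall>b\<in>(Basis :: 'a set). \<forall>b'\<in>Basis. G (W b) (W b') = (if b = b' then 1 else 0)"
proof -
  have linl: "\<And>y. linear (\<lambda>x. G x y)" and linr: "\<And>x. linear (\<lambda>y. G x y)"
    using bil unfolding bilinear_def by auto
  have step: "k \<le> DIM('a) \<Longrightarrow> \<exists>T. finite T \<and> card T = k \<and> ONsys G T" for k
  proof (induction k)
    case 0
    then show ?case by (intro exI[of _ "{}"]) (simp add: ONsys_def)
  next
    case (Suc k)
    then obtain T where T: "finite T" "card T = k" "ONsys G T" by auto
    have ind: "independent T" using on_independent[OF linl T(3) T(1)] .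
    have "dim T = k" using dim_eq_card_independent[OF ind] T(2) by simp
    then have "span T \<noteq> UNIV" using Suc.prems dim_eq_full[of T] by auto
    then obtain x where x: "x \<notin> span T" by auto
    define y where "y = x - (\<Sum>t\<in>T. G x t *\<^sub>R t)"
    have "(\<Sum>t\<in>T. G x t *\<^sub>R t) \<in> span T"
      by (intro span_sum span_scale span_base)
    then have y0: "y \<noteq> 0" using x unfolding y_def by auto
    have yt: "G y t0 = 0" if t0: "t0 \<in> T" for t0
    proof -
      have "G y t0 = G x t0 - (\<Sum>t\<in>T. G x t * G t t0)"
        unfolding y_def by (simp add: linear_diff[OF linl[of t0]] linear_sum[OF linl[of t0]]
          linear_scale[OF linl[of t0]])
      also have "(\<Sum>t\<in>T. G x t * G t t0) = (\<Sum>t\<in>T. if t = t0 then G x t else 0)"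
        using T(3) t0 unfolding ONsys_def by (intro sum.cong) auto
      also have "\<dots> = G x t0" using t0 T(1) by simp
      finally show ?thesis by simp
    qed
    have ypos: "G y y > 0" using pos y0 by blast
    define z where "z = (1 / sqrt (G y y)) *\<^sub>R y"
    have zz: "G z z = 1"
      unfolding z_def using ypos
      by (simp add: linear_scale[OF linl] linear_scale[OF linr] power2_eq_square[symmetric])
    have zt: "G z t = 0" "G t z = 0" if "t \<in> T" for t
      unfolding z_def using yt[OF that] sym by (auto simp: linear_scale[OF linl] linear_scale[OF linr])
    have znT: "z \<notin> T" using zz zt by force
    show ?case
    proof (intro exI[of _ "insert z T"] conjI)
      show "finite (insert z T)" using T(1) by simp
      show "card (insert z T) = Suc k" using T znT by simp
      show "ONsys G (insert z T)"
        using T(3) zz zt znT unfolding ONsys_def by auto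
    qed
  qed
  obtain T where T: "finite T" "card T = DIM('a)" "ONsys G T" using step[of "DIM('a)"] by auto
  obtain h :: "'a \<Rightarrow> 'a" where h: "bij_betw h (Basis :: 'a set) T"
    using finite_same_card_bij[of "Basis :: 'a set" T] T by force
  have "\<forall>b\<in>Basis. \<forall>b'\<in>Basis. G (h b) (h b') = (if b = b' then 1 else 0)"
  proof (intro ballI)
    fix b b' :: 'a assume b: "b \<in> Basis" "b' \<in> Basis"
    have "h b \<in> T" "h b' \<in> T" using h b by (auto simp: bij_betw_def)
    moreover have "h b = h b' \<longleftrightarrow> b = b'" using h b by (auto simp: bij_betw_def inj_on_def)
    ultimately show "G (h b) (h b') = (if b = b' then 1 else 0)"
      using T(3) unfolding ONsys_def by auto
  qed
  then show ?thesis by blast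
qed

lemma frame_expand:
  fixes G :: "'a::euclidean_space \<Rightarrow> 'a \<Rightarrow> real" and W :: "'a \<Rightarrow> 'a"
  assumes bil: "bilinear G"
    and W: "\<forall>b\<in>Basis. \<forall>b'\<in>Basis. G (W b) (W b') = (if b = b' then 1 else 0)"
  shows "x = (\<Sum>c\<in>Basis. G x (W c) *\<^sub>R W c)"
proof -
  have linl: "\<And>y. linear (\<lambda>x. G x y)"
    using bil unfolding bilinear_def by auto
  have inj: "inj_on W Basis"
  proof (rule inj_onI)
    fix b b' :: 'a assume b: "b \<in> Basis" "b' \<in> Basis" "W b = W b'"
    have 1: "G (W b) (W b) = 1" using W b(1) by auto
    then have "G (W b) (W b') = 1" using b(3) by simp
    moreover have "b \<noteq> b' \<Longrightarrow> G (W b) (W b') = 0" using W b(1,2) by auto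
    ultimately show "b = b'" by auto
  qed
  have on: "ONsys G (W ` Basis)" using W inj unfolding ONsys_def inj_on_def by auto
  have ind: "independent (W ` Basis)" using on_independent[OF linl on] by simp
  have card: "card (W ` Basis) = DIM('a)" using card_image[OF inj] by simp
  have "UNIV \<subseteq> span (W ` Basis)"
    using card_ge_dim_independent[OF subset_UNIV ind] card by simp
  then obtain u where u: "x = (\<Sum>v\<in>W ` Basis. u v *\<^sub>R v)"
    using span_finite[of "W ` Basis"] by auto
  then have u2: "x = (\<Sum>c\<in>Basis. u (W c) *\<^sub>R W c)"
    using sum.reindex[OF inj, of "\<lambda>v. u v *\<^sub>R v"] by simp
  have "G x (W d) = u (W d)" if d: "d \<in> Basis" for d
  proof -
    have "G x (W d) = (\<Sum>c\<in>Basis. u (W c) * G (W c) (W d))"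
      apply (subst u2) by (simp add: linear_sum[OF linl[of "W d"]] linear_scale[OF linl[of "W d"]])
    also have "\<dots> = (\<Sum>c\<in>Basis. if c = d then u (W c) else 0)"
      using W d by (intro sum.cong) auto
    also have "\<dots> = u (W d)" using d by simp
    finally show ?thesis .
  qed
  then show ?thesis using u2 by (metis (no_types, lifting) sum.cong)
qed

lemma trace_invariant:
  fixes G B :: "'a::euclidean_space \<Rightarrow> 'a \<Rightarrow> real" and W W' :: "'a \<Rightarrow> 'a"
  assumes bil: "bilinear G" and sym: "\<And>x y. G x y = G y x" and bB: "bilinear B"
    and W: "\<forall>b\<in>Basis. \<forall>b'\<in>Basis. G (W b) (W b') = (if b = b' then 1 else 0)"
    and W': "\<forall>b\<in>Basis. \<forall>b'\<in>Basis. G (W' b) (W' b') = (if b = b' then 1 else 0)"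
  shows "(\<Sum>b\<in>Basis. B (W b) (W b)) = (\<Sum>b\<in>Basis. B (W' b) (W' b))"
proof -
  have linl: "\<And>y. linear (\<lambda>x. G x y)" and linr: "\<And>x. linear (\<lambda>y. G x y)"
    using bil unfolding bilinear_def by auto
  have Bl: "\<And>y. linear (\<lambda>x. B x y)" and Br: "\<And>x. linear (\<lambda>y. B x y)"
    using bB unfolding bilinear_def by auto
  have exp: "B x x = (\<Sum>c\<in>Basis. \<Sum>d\<in>Basis. G x (W c) * G x (W d) * B (W c) (W d))" for x
  proof -
    have "B x x = B (\<Sum>c\<in>Basis. G x (W c) *\<^sub>R W c) (\<Sum>d\<in>Basis. G x (W d) *\<^sub>R W d)"
      using frame_expand[OF bil W, of x] by simp
    also have "\<dots> = (\<Sum>c\<in>Basis. G x (W c) * B (W c) (\<Sum>d\<in>Basis. G x (W d) *\<^sub>R W d))"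
      by (simp add: linear_sum[OF Bl] linear_scale[OF Bl])
    also have "\<dots> = (\<Sum>c\<in>Basis. \<Sum>d\<in>Basis. G x (W c) * G x (W d) * B (W c) (W d))"
      by (simp add: linear_sum[OF Br] linear_scale[OF Br] sum_distrib_left mult.assoc)
    finally show ?thesis .
  qed
  have key: "(\<Sum>b\<in>Basis. G (W' b) (W c) * G (W' b) (W d)) = (if c = d then 1 else 0)"
    if "c \<in> Basis" "d \<in> Basis" for c d
  proof -
    have "(\<Sum>b\<in>Basis. G (W' b) (W c) * G (W' b) (W d)) = G (W c) (\<Sum>b\<in>Basis. G (W d) (W' b) *\<^sub>R W' b)"
      using sym by (simp add: linear_sum[OF linr] linear_scale[OF linr] mult.commute)
    also have "\<dots> = G (W c) (W d)" using frame_expand[OF bil W', of "W d"] by simp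
    finally show ?thesis using W that by simp
  qed
  have "(\<Sum>b\<in>Basis. B (W' b) (W' b))
      = (\<Sum>b\<in>Basis. \<Sum>c\<in>Basis. \<Sum>d\<in>Basis. G (W' b) (W c) * G (W' b) (W d) * B (W c) (W d))"
    using exp by simp
  also have "\<dots> = (\<Sum>c\<in>Basis. \<Sum>b\<in>Basis. \<Sum>d\<in>Basis. G (W' b) (W c) * G (W' b) (W d) * B (W c) (W d))"
    by (rule sum.swap)
  also have "\<dots> = (\<Sum>c\<in>Basis. \<Sum>d\<in>Basis. \<Sum>b\<in>Basis. G (W' b) (W c) * G (W' b) (W d) * B (W c) (W d))"
    by (rule sum.cong[OF refl], rule sum.swap)
  also have "\<dots> = (\<Sum>c\<in>Basis. \<Sum>d\<in>Basis. (\<Sum>b\<in>Basis. G (W' b) (W c) * G (W' b) (W d)) * B (W c) (W d))"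
    by (simp only: sum_distrib_right)
  also have "\<dots> = (\<Sum>c\<in>Basis. \<Sum>d\<in>Basis. (if c = d then B (W c) (W d) else 0))"
    using key by (intro sum.cong refl) auto
  also have "\<dots> = (\<Sum>c\<in>Basis. B (W c) (W c))" by simp
  finally show ?thesis by simp
qed

lemma slice_deriv:
  assumes "F differentiable (at (g x))" "(g has_derivative L) (at x)"
    "((\<lambda>y. F (g y)) has_derivative D) (at x)"
  shows "frechet_derivative F (at (g x)) (L w) = D w"
proof -
  have F: "(F has_derivative frechet_derivative F (at (g x))) (at (g x))"
    using assms(1) frechet_derivative_works by blast
  have "((F \<circ> g) has_derivative (frechet_derivative F (at (g x)) \<circ> L)) (at x)"
    using diff_chain_at[OF assms(2) F] .
  then have "((\<lambda>y. F (g y)) has_derivative (frechet_derivative F (at (g x)) \<circ> L)) (at x)"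
    by (simp add: o_def)
  from has_derivative_unique[OF this assms(3)] show ?thesis by (metis comp_apply)
qed

lemma const_bilin_deriv:
  assumes bb: "bounded_bilinear Q" and U: "open U" "u \<in> U"
    and F: "(F has_derivative F') (at u)" and H: "(H has_derivative H') (at u)"
    and c: "\<And>v. v \<in> U \<Longrightarrow> Q (F v) (H v) = c"
  shows "Q (F' w) (H u) + Q (F u) (H' w) = 0"
proof -
  have d1: "((\<lambda>x. Q (F x) (H x)) has_derivative (\<lambda>h. Q (F u) (H' h) + Q (F' h) (H u))) (at u)"
    using bounded_bilinear.FDERIV[OF bb F H] .
  have "((\<lambda>x. c) has_derivative (\<lambda>h. 0)) (at u)" by simp
  then have d2: "((\<lambda>x. Q (F x) (H x)) has_derivative (\<lambda>h. 0)) (at u)"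
    by (rule has_derivative_transform_within_open[OF _ U]) (simp add: c)
  from has_derivative_unique[OF d1 d2] show ?thesis by (metis add.commute)
qed

lemma lincomb_deriv:
  fixes X Y :: "'a::real_normed_vector \<Rightarrow> 'b::real_normed_vector"
  assumes "(X has_derivative X') (at u)" "(Y has_derivative Y') (at u)"
  shows "((\<lambda>u. a *\<^sub>R X u + b *\<^sub>R Y u) has_derivative (\<lambda>w. a *\<^sub>R X' w + b *\<^sub>R Y' w)) (at u)"
  using assms by (auto intro!: derivative_eq_intros)

lemma C1_on_diff: "C1_on U F \<Longrightarrow> u \<in> U \<Longrightarrow> (F has_derivative frechet_derivative F (at u)) (at u)"
  unfolding C1_on_def using frechet_derivative_works by blast

lemma C1_on_cont: "C1_on U F \<Longrightarrow> continuous_on U F"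
  unfolding C1_on_def
  by (meson continuous_at_imp_continuous_on differentiable_imp_continuous_within)

lemma C1_lincomb:
  fixes X Y :: "'a::euclidean_space \<Rightarrow> 'b::real_normed_vector"
  assumes "C1_on U X" "C1_on U Y"
  shows "C1_on U (\<lambda>u. a *\<^sub>R X u + b *\<^sub>R Y u)"
    and "u \<in> U \<Longrightarrow> frechet_derivative (\<lambda>u. a *\<^sub>R X u + b *\<^sub>R Y u) (at u) =
          (\<lambda>w. a *\<^sub>R frechet_derivative X (at u) w + b *\<^sub>R frechet_derivative Y (at u) w)"
proof -
  have fd: "frechet_derivative (\<lambda>u. a *\<^sub>R X u + b *\<^sub>R Y u) (at u) =
          (\<lambda>w. a *\<^sub>R frechet_derivative X (at u) w + b *\<^sub>R frechet_derivative Y (at u) w)"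
    if "u \<in> U" for u
    using frechet_derivative_at[OF lincomb_deriv[OF C1_on_diff[OF assms(1) that] C1_on_diff[OF assms(2) that]]]
    by simp
  then show "u \<in> U \<Longrightarrow> frechet_derivative (\<lambda>u. a *\<^sub>R X u + b *\<^sub>R Y u) (at u) =
          (\<lambda>w. a *\<^sub>R frechet_derivative X (at u) w + b *\<^sub>R frechet_derivative Y (at u) w)" .
  show "C1_on U (\<lambda>u. a *\<^sub>R X u + b *\<^sub>R Y u)"
    unfolding C1_on_def
  proof (intro conjI ballI)
    fix u assume "u \<in> U"
    then show "(\<lambda>u. a *\<^sub>R X u + b *\<^sub>R Y u) differentiable at u"
      using lincomb_deriv[OF C1_on_diff[OF assms(1)] C1_on_diff[OF assms(2)]] differentiable_def by blast
  next
    fix c :: 'a assume c: "c \<in> Basis"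
    have "continuous_on U (\<lambda>u. a *\<^sub>R frechet_derivative X (at u) c + b *\<^sub>R frechet_derivative Y (at u) c)"
      using assms c unfolding C1_on_def by (intro continuous_intros) auto
    then show "continuous_on U (\<lambda>u. frechet_derivative (\<lambda>u. a *\<^sub>R X u + b *\<^sub>R Y u) (at u) c)"
      by (rule continuous_on_cong[THEN iffD1, rotated 2]) (auto simp: fd)
  qed
qed

lemma qform_lin2: "qform e (a *\<^sub>R x + b *\<^sub>R y) (c *\<^sub>R z + d *\<^sub>R w) =
  a * c * qform e x z + a * d * qform e x w + b * c * qform e y z + b * d * qform e y w"
  by (simp add: qform_simps algebra_simps)

locale factor =
  fixes e :: real and X \<eta> :: "'c::euclidean_space \<Rightarrow> 'b::euclidean_space \<times> real" and U :: "'c set"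
  assumes hs: "hypersurface (qform e) (Qspace e) (Qtangent e) X \<eta> U"
begin

definition Nrm :: "real \<Rightarrow> 'c \<Rightarrow> 'b \<times> real" where
  "Nrm s u = dcs e s *\<^sub>R X u + dsn e s *\<^sub>R \<eta> u"

lemma U_open: "open U" and U_conn: "connected U" and U_ne: "U \<noteq> {}"
  and X_C1: "C1_on U X" and eta_C1: "C1_on U \<eta>"
  using hs unfolding hypersurface_def by auto

lemma X_in: "u \<in> U \<Longrightarrow> X u \<in> Qspace e"
  and eta_tan: "u \<in> U \<Longrightarrow> \<eta> u \<in> Qtangent e (X u)"
  and eta_unit: "u \<in> U \<Longrightarrow> qform e (\<eta> u) (\<eta> u) = 1"
  and eta_orth: "u \<in> U \<Longrightarrow> qform e (\<eta> u) (frechet_derivative X (at u) w) = 0"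
  and dX_tan: "u \<in> U \<Longrightarrow> frechet_derivative X (at u) w \<in> Qtangent e (X u)"
  using hs unfolding hypersurface_def by auto

lemma X_deriv: "u \<in> U \<Longrightarrow> (X has_derivative frechet_derivative X (at u)) (at u)"
  using C1_on_diff[OF X_C1] .
lemma eta_deriv: "u \<in> U \<Longrightarrow> (\<eta> has_derivative frechet_derivative \<eta> (at u)) (at u)"
  using C1_on_diff[OF eta_C1] .

lemma qXX: "e \<noteq> 0 \<Longrightarrow> u \<in> U \<Longrightarrow> qform e (X u) (X u) = 1 / e"
proof -
  assume "e \<noteq> 0" "u \<in> U"
  then have "X u \<in> Qspace e" using X_in by blast
  then show ?thesis using \<open>e \<noteq> 0\<close> by (cases "e > 0") (auto simp: Qspace_def)
qed

lemma qXeta: "e \<noteq> 0 \<Longrightarrow> u \<in> U \<Longrightarrow> qform e (X u) (\<eta> u) = 0"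
  using eta_tan by (auto simp: Qtangent_def)

lemma qXdX: "e \<noteq> 0 \<Longrightarrow> u \<in> U \<Longrightarrow> qform e (X u) (frechet_derivative X (at u) w) = 0"
  using dX_tan by (auto simp: Qtangent_def)

lemma qeta_deta: "u \<in> U \<Longrightarrow> qform e (\<eta> u) (frechet_derivative \<eta> (at u) w) = 0"
proof -
  assume u: "u \<in> U"
  have "qform e (frechet_derivative \<eta> (at u) w) (\<eta> u) + qform e (\<eta> u) (frechet_derivative \<eta> (at u) w) = 0"
    by (rule const_bilin_deriv[OF qform_bb U_open u eta_deriv[OF u] eta_deriv[OF u]]) (rule eta_unit)
  moreover have "qform e (frechet_derivative \<eta> (at u) w) (\<eta> u) = qform e (\<eta> u) (frechet_derivative \<eta> (at u) w)"
    by (rule qform_sym)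
  ultimately show ?thesis by linarith
qed

lemma qX_deta: "e \<noteq> 0 \<Longrightarrow> u \<in> U \<Longrightarrow> qform e (X u) (frechet_derivative \<eta> (at u) w) = 0"
proof -
  assume e: "e \<noteq> 0" and u: "u \<in> U"
  have "qform e (frechet_derivative X (at u) w) (\<eta> u) + qform e (X u) (frechet_derivative \<eta> (at u) w) = 0"
    by (rule const_bilin_deriv[OF qform_bb U_open u X_deriv[OF u] eta_deriv[OF u]]) (rule qXeta[OF e])
  moreover have "qform e (frechet_derivative X (at u) w) (\<eta> u) = 0"
    using qform_sym[of e] eta_orth[OF u] by metis
  ultimately show ?thesis by linarith
qed

lemma par_eq: "parallel e X \<eta> s = (\<lambda>u. cs e s *\<^sub>R X u + sn e s *\<^sub>R \<eta> u)"
  by (rule ext) (simp add: parallel_def)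

lemma N_eq: "Nrm s = (\<lambda>u. dcs e s *\<^sub>R X u + dsn e s *\<^sub>R \<eta> u)"
  by (rule ext) (simp add: Nrm_def)

lemma par_C1: "C1_on U (parallel e X \<eta> s)"
  unfolding par_eq by (rule C1_lincomb(1)[OF X_C1 eta_C1])

lemma par_fd: "u \<in> U \<Longrightarrow> frechet_derivative (parallel e X \<eta> s) (at u) =
   (\<lambda>w. cs e s *\<^sub>R frechet_derivative X (at u) w + sn e s *\<^sub>R frechet_derivative \<eta> (at u) w)"
  unfolding par_eq by (rule C1_lincomb(2)[OF X_C1 eta_C1])

lemma N_C1: "C1_on U (Nrm s)"
  unfolding N_eq by (rule C1_lincomb(1)[OF X_C1 eta_C1])

lemma N_fd: "u \<in> U \<Longrightarrow> frechet_derivative (Nrm s) (at u) =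
   (\<lambda>w. dcs e s *\<^sub>R frechet_derivative X (at u) w + dsn e s *\<^sub>R frechet_derivative \<eta> (at u) w)"
  unfolding N_eq by (rule C1_lincomb(2)[OF X_C1 eta_C1])

lemma N_unit: "u \<in> U \<Longrightarrow> qform e (Nrm s u) (Nrm s u) = 1"
proof -
  assume u: "u \<in> U"
  have "qform e (Nrm s u) (Nrm s u) = dcs e s * dcs e s * qform e (X u) (X u)
     + 2 * dcs e s * dsn e s * qform e (X u) (\<eta> u) + dsn e s * dsn e s * qform e (\<eta> u) (\<eta> u)"
    unfolding Nrm_def qform_lin2 using qform_sym[of e "\<eta> u" "X u"] by simp
  also have "\<dots> = 1"
  proof (cases "e = 0")
    case True
    then show ?thesis using eta_unit[OF u] by (simp add: dcs_zero dsn_zero)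
  next
    case False
    then show ?thesis using qXX[OF False u] qXeta[OF False u] eta_unit[OF u] trig_id_N[OF False, of s]
      by simp
  qed
  finally show ?thesis .
qed

lemma N_orth: "u \<in> U \<Longrightarrow> qform e (Nrm s u) (frechet_derivative (parallel e X \<eta> s) (at u) w) = 0"
proof -
  assume u: "u \<in> U"
  let ?dX = "frechet_derivative X (at u) w" and ?de = "frechet_derivative \<eta> (at u) w"
  have "qform e (Nrm s u) (frechet_derivative (parallel e X \<eta> s) (at u) w)
     = dcs e s * cs e s * qform e (X u) ?dX + dcs e s * sn e s * qform e (X u) ?de
       + dsn e s * cs e s * qform e (\<eta> u) ?dX + dsn e s * sn e s * qform e (\<eta> u) ?de"
    unfolding Nrm_def par_fd[OF u] qform_lin2 by simp
  also have "\<dots> = 0"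
  proof (cases "e = 0")
    case True
    then show ?thesis using eta_orth[OF u] qeta_deta[OF u] by (simp add: dcs_zero)
  next
    case False
    then show ?thesis using eta_orth[OF u] qeta_deta[OF u] qXdX[OF False u] qX_deta[OF False u] by simp
  qed
  finally show ?thesis .
qed

lemma par_vd: "((\<lambda>s. parallel e X \<eta> s u) has_vector_derivative Nrm s u) (at s)"
proof -
  have "((\<lambda>s. cs e s *\<^sub>R X u + sn e s *\<^sub>R \<eta> u) has_vector_derivative
      (cs e s *\<^sub>R 0 + dcs e s *\<^sub>R X u) + (sn e s *\<^sub>R 0 + dsn e s *\<^sub>R \<eta> u)) (at s)"
    by (intro has_vector_derivative_add has_vector_derivative_scaleR cs_deriv sn_deriv has_vector_derivative_const)
  then show ?thesis by (simp add: parallel_def Nrm_def)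
qed

lemma N_vd: "((\<lambda>s. Nrm s u) has_vector_derivative (- e) *\<^sub>R parallel e X \<eta> s u) (at s)"
proof -
  have "((\<lambda>s. dcs e s *\<^sub>R X u + dsn e s *\<^sub>R \<eta> u) has_vector_derivative
      (dcs e s *\<^sub>R 0 + (- e * cs e s) *\<^sub>R X u) + (dsn e s *\<^sub>R 0 + (- e * sn e s) *\<^sub>R \<eta> u)) (at s)"
    by (intro has_vector_derivative_add has_vector_derivative_scaleR dcs_deriv dsn_deriv has_vector_derivative_const)
  then show ?thesis by (simp add: parallel_def Nrm_def scaleR_add_right)
qed

end

lemma Qtangent_subspace: "subspace (Qtangent e p)"
  unfolding Qtangent_def subspace_def
  by (auto simp: qform_simps)

lemma Qtangent_dim:
  fixes p :: "'b::euclidean_space \<times> real"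
  assumes p: "p \<in> Qspace e"
  shows "dim (Qtangent e p) \<le> DIM('b)"
proof -
  obtain z where z: "z \<notin> Qtangent e p"
  proof (cases "e = 0")
    case True
    then show ?thesis using that[of "(0, 1)"] by (simp add: Qtangent_def)
  next
    case False
    have "qform e p p = 1 / e" using p False by (cases "e > 0") (auto simp: Qspace_def)
    then show ?thesis using that[of p] False by (simp add: Qtangent_def)
  qed
  have "span (Qtangent e p) = Qtangent e p"
    by (rule span_eq_iff[THEN iffD2, OF Qtangent_subspace])
  then have "span (Qtangent e p) \<noteq> UNIV" using z by (metis UNIV_I)
  then have "dim (Qtangent e p) \<noteq> DIM('b \<times> real)" using dim_eq_full by blast
  moreover have "dim (Qtangent e p) \<le> DIM('b \<times> real)" by (rule dim_subset_UNIV)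
  ultimately show ?thesis by simp
qed

lemma orth_compl:
  fixes L :: "'c::euclidean_space \<Rightarrow> 'b::euclidean_space \<times> real"
  assumes dim: "DIM('c) + 1 = DIM('b)" and p: "p \<in> Qspace e" and lin: "linear L" and inj: "inj L"
    and Lt: "\<And>w. L w \<in> Qtangent e p" and N: "N \<in> Qtangent e p" and Nu: "qform e N N = 1"
    and NL: "\<And>w. qform e N (L w) = 0" and v: "v \<in> Qtangent e p" and vL: "\<And>w. qform e v (L w) = 0"
  shows "v = qform e v N *\<^sub>R N"
proof -
  have indL: "independent (L ` Basis)"
    using linear_independent_injective_image[OF lin independent_Basis inj_on_subset[OF inj subset_UNIV]] .
  have Nspan: "N \<notin> span (L ` Basis)"
  proof
    assume "N \<in> span (L ` Basis)"
    then have "qform e N N = 0"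
      by (rule linear_eq_0_on_span[OF qform_linear_right, rotated]) (auto simp: NL)
    then show False using Nu by simp
  qed
  define T where "T = insert N (L ` Basis)"
  have indT: "independent T" unfolding T_def by (rule independent_insertI[OF Nspan indL])
  have "card (L ` Basis) = DIM('c)" using card_image[OF inj_on_subset[OF inj subset_UNIV]] by simp
  moreover have "N \<notin> L ` Basis"
  proof
    assume "N \<in> L ` Basis"
    then have "N \<in> span (L ` Basis)" by (rule span_base)
    with Nspan show False by simp
  qed
  ultimately have cardT: "card T = DIM('b)" unfolding T_def using dim by simp
  have TQ: "T \<subseteq> Qtangent e p" unfolding T_def using N Lt by auto
  have QT: "Qtangent e p \<subseteq> span T"
    using card_ge_dim_independent[OF TQ indT] Qtangent_dim[OF p] cardT by simp
  define v' where "v' = v - qform e v N *\<^sub>R N"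
  have v'Q: "v' \<in> Qtangent e p" unfolding v'_def
    using subspace_diff[OF Qtangent_subspace v subspace_scale[OF Qtangent_subspace N]] .
  have v'T: "qform e v' t = 0" if "t \<in> T" for t
    using that unfolding T_def v'_def by (auto simp: qform_simps Nu NL vL)
  have "qform e v' v' = 0"
    using linear_eq_0_on_span[OF qform_linear_right[of e v'], of T v'] v'T subsetD[OF QT v'Q] by blast
  then have "v' = 0" by (rule contrapos_pp) (use qform_pos[OF p v'Q] in auto)
  then show ?thesis unfolding v'_def by simp
qed

lemma frame_exists_imm:
  fixes L :: "'c::euclidean_space \<Rightarrow> 'b::euclidean_space \<times> real"
  assumes p: "p \<in> Qspace e" and lin: "linear L" and inj: "inj L" and Lt: "\<And>w. L w \<in> Qtangent e p"
  shows "\<exists>W :: 'c \<Rightarrow> 'c. \<forall>b\<in>(Basis :: 'c set). \<forall>b'\<in>Basis. qform e (L (W b)) (L (W b')) = (if b = b' then 1 else 0)"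
proof (rule gram_schmidt_exists)
  show "bilinear (\<lambda>x y. qform e (L x) (L y))"
    unfolding bilinear_def
    using linear_compose[OF lin qform_linear_left] linear_compose[OF lin qform_linear_right]
    by (auto simp: o_def)
  show "\<And>x y. qform e (L x) (L y) = qform e (L y) (L x)" by (rule qform_sym)
  show "\<And>x. x \<noteq> 0 \<Longrightarrow> 0 < qform e (L x) (L x)"
  proof -
    fix x :: 'c assume "x \<noteq> 0"
    have "L x \<noteq> L 0"
    proof
      assume "L x = L 0"
      then have "x = 0" by (rule injD[OF inj])
      then show False using \<open>x \<noteq> 0\<close> by simp
    qed
    then have "L x \<noteq> 0" using linear_0[OF lin] by simp
    then show "0 < qform e (L x) (L x)" using qform_pos[OF p Lt] by blast
  qed
qed

lemma pform_bilinear: "bilinear (pform e1 e2)"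
  unfolding bilinear_def
  by (intro conjI allI linearI) (simp_all add: pform_def qform_simps algebra_simps)

lemma pform_sym: "pform e1 e2 p q = pform e1 e2 q p"
  by (simp add: pform_def qform_sym)

lemma pform_pair: "pform e1 e2 (a, b) (c, d) = qform e1 a c + qform e2 b d"
  by (simp add: pform_def)

locale sig = F1: factor e1 X1 \<eta>1 U1 + F2: factor e2 X2 \<eta>2 U2
  for e1 :: real and X1 \<eta>1 :: "'c1::euclidean_space \<Rightarrow> 'b1::euclidean_space \<times> real" and U1
  and e2 :: real and X2 \<eta>2 :: "'c2::euclidean_space \<Rightarrow> 'b2::euclidean_space \<times> real" and U2 +
  fixes I :: "real set" and \<phi> :: "real \<Rightarrow> real"
    and \<nu> :: "('c1 \<times> 'c2) \<times> real \<Rightarrow> ('b1 \<times> real) \<times> ('b2 \<times> real)" and c :: real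
  assumes dim1: "DIM('c1) + 1 = DIM('b1)" and dim2: "DIM('c2) + 1 = DIM('b2)"
    and I: "open I"
    and phi: "diffeo_on I \<phi>"
    and hsS: "hypersurface (pform e1 e2) (Qspace e1 \<times> Qspace e2) (Ptangent e1 e2)
                  (fphi_map e1 e2 X1 \<eta>1 X2 \<eta>2 \<phi>) \<nu> ((U1 \<times> U2) \<times> I)"
    and Hc: "\<And>x. x \<in> (U1 \<times> U2) \<times> I \<Longrightarrow> mean_curv (pform e1 e2) (fphi_map e1 e2 X1 \<eta>1 X2 \<eta>2 \<phi>) \<nu> x = c"
begin

abbreviation "Phi \<equiv> fphi_map e1 e2 X1 \<eta>1 X2 \<eta>2 \<phi>"
abbreviation "f1 \<equiv> parallel e1 X1 \<eta>1"
abbreviation "f2 \<equiv> parallel e2 X2 \<eta>2"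
abbreviation "N1 \<equiv> F1.Nrm"
abbreviation "N2 \<equiv> F2.Nrm"
abbreviation "df1 s u \<equiv> frechet_derivative (f1 s) (at u)"
abbreviation "df2 t q \<equiv> frechet_derivative (f2 t) (at q)"
abbreviation "dPhi x \<equiv> frechet_derivative Phi (at x)"
abbreviation "dnu x \<equiv> frechet_derivative \<nu> (at x)"

lemma Phi_eq: "Phi ((u, q), s) = (f1 s u, f2 (\<phi> s) q)"
  by (simp add: fphi_map_def)

lemma D_open: "open ((U1 \<times> U2) \<times> I)"
  using F1.U_open F2.U_open I by (intro open_Times) auto

lemma Phi_C1: "C1_on ((U1 \<times> U2) \<times> I) Phi" and nu_C1: "C1_on ((U1 \<times> U2) \<times> I) \<nu>"
  using hsS unfolding hypersurface_def by auto

lemma Phi_diff: "x \<in> (U1 \<times> U2) \<times> I \<Longrightarrow> Phi differentiable (at x)"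
  and nu_diff: "x \<in> (U1 \<times> U2) \<times> I \<Longrightarrow> \<nu> differentiable (at x)"
  using Phi_C1 nu_C1 unfolding C1_on_def by auto

lemma hsS': "\<forall>x\<in>(U1 \<times> U2) \<times> I. Phi x \<in> Qspace e1 \<times> Qspace e2 \<and> inj (dPhi x) \<and>
        (\<forall>w. dPhi x w \<in> Ptangent e1 e2 (Phi x)) \<and>
        \<nu> x \<in> Ptangent e1 e2 (Phi x) \<and> pform e1 e2 (\<nu> x) (\<nu> x) = 1 \<and>
        (\<forall>w. pform e1 e2 (\<nu> x) (dPhi x w) = 0)"
  using hsS unfolding hypersurface_def by blast

lemma Phi_in: "x \<in> (U1 \<times> U2) \<times> I \<Longrightarrow> Phi x \<in> Qspace e1 \<times> Qspace e2"
  using hsS' by blast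
lemma dPhi_inj: "x \<in> (U1 \<times> U2) \<times> I \<Longrightarrow> inj (dPhi x)"
  using hsS' by blast
lemma dPhi_tan: "x \<in> (U1 \<times> U2) \<times> I \<Longrightarrow> dPhi x w \<in> Ptangent e1 e2 (Phi x)"
  using hsS' by blast
lemma nu_tan: "x \<in> (U1 \<times> U2) \<times> I \<Longrightarrow> \<nu> x \<in> Ptangent e1 e2 (Phi x)"
  using hsS' by blast
lemma nu_unit: "x \<in> (U1 \<times> U2) \<times> I \<Longrightarrow> pform e1 e2 (\<nu> x) (\<nu> x) = 1"
  using hsS' by blast
lemma nu_orth: "x \<in> (U1 \<times> U2) \<times> I \<Longrightarrow> pform e1 e2 (\<nu> x) (dPhi x w) = 0"
  using hsS' by blast

lemma phi_deriv: "s \<in> I \<Longrightarrow> (\<phi> has_real_derivative deriv \<phi> s) (at s)"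
  using phi unfolding diffeo_on_def using DERIV_deriv_iff_real_differentiable by blast

lemma phi_deriv_nz: "s \<in> I \<Longrightarrow> deriv \<phi> s \<noteq> 0"
proof
  assume s: "s \<in> I" and z: "deriv \<phi> s = 0"
  let ?psi = "the_inv_into I \<phi>"
  have "?psi differentiable (at (\<phi> s))" using phi s unfolding diffeo_on_def by auto
  then obtain d where d: "(?psi has_real_derivative d) (at (\<phi> s))"
    using DERIV_deriv_iff_real_differentiable by blast
  have "((?psi \<circ> \<phi>) has_real_derivative d * deriv \<phi> s) (at s)"
    using DERIV_chain[OF d phi_deriv[OF s]] .
  then have d0: "((?psi \<circ> \<phi>) has_real_derivative 0) (at s)" using z by simp
  have inj: "inj_on \<phi> I" using phi unfolding diffeo_on_def by auto
  have "((\<lambda>x. x) has_real_derivative 1) (at s)" by (rule DERIV_ident)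
  then have "((?psi \<circ> \<phi>) has_real_derivative 1) (at s)"
    by (rule has_field_derivative_transform_within_open[OF _ I s])
       (simp add: the_inv_into_f_f[OF inj])
  from DERIV_unique[OF d0 this] show False by simp
qed

lemma slice1_deriv: "(g has_derivative g') (at u) \<Longrightarrow>
  ((\<lambda>u'. ((u', q), s)) has_derivative (\<lambda>w. ((w, 0), 0))) (at u)"
  by (auto intro!: derivative_eq_intros)

lemma dPhi1:
  assumes x: "u \<in> U1" "q \<in> U2" "s \<in> I"
  shows "dPhi ((u, q), s) ((w, 0), 0) = (df1 s u w, 0)"
proof -
  have g: "((\<lambda>u'. ((u', q), s)) has_derivative (\<lambda>w. ((w, 0), 0))) (at u)"
    by (auto intro!: derivative_eq_intros simp: zero_prod_def)
  have "((\<lambda>u'. Phi ((u', q), s)) has_derivative (\<lambda>w. (df1 s u w, 0))) (at u)"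
    unfolding Phi_eq
    by (intro has_derivative_Pair C1_on_diff[OF F1.par_C1 x(1)] has_derivative_const)
  from slice_deriv[of Phi "\<lambda>u'. ((u', q), s)" u, OF _ g this] Phi_diff x show ?thesis by auto
qed

lemma dPhi2:
  assumes x: "u \<in> U1" "q \<in> U2" "s \<in> I"
  shows "dPhi ((u, q), s) ((0, w), 0) = (0, df2 (\<phi> s) q w)"
proof -
  have g: "((\<lambda>q'. ((u, q'), s)) has_derivative (\<lambda>w. ((0, w), 0))) (at q)"
    by (auto intro!: derivative_eq_intros simp: zero_prod_def)
  have "((\<lambda>q'. Phi ((u, q'), s)) has_derivative (\<lambda>w. (0, df2 (\<phi> s) q w))) (at q)"
    unfolding Phi_eq
    by (intro has_derivative_Pair C1_on_diff[OF F2.par_C1 x(2)] has_derivative_const)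
  from slice_deriv[of Phi "\<lambda>q'. ((u, q'), s)" q, OF _ g this] Phi_diff x show ?thesis by auto
qed

lemma f2phi_deriv:
  assumes s: "s \<in> I"
  shows "((\<lambda>s'. f2 (\<phi> s') q) has_derivative (\<lambda>h. h *\<^sub>R (deriv \<phi> s *\<^sub>R N2 (\<phi> s) q))) (at s)"
proof -
  have a: "(\<phi> has_derivative (\<lambda>h. h * deriv \<phi> s)) (at s)"
    using phi_deriv[OF s] by (simp add: has_field_derivative_def mult_commute_abs)
  have b: "((\<lambda>t. f2 t q) has_derivative (\<lambda>h. h *\<^sub>R N2 (\<phi> s) q)) (at (\<phi> s))"
    using F2.par_vd[of q "\<phi> s"] by (simp add: has_vector_derivative_def)
  have "(((\<lambda>t. f2 t q) \<circ> \<phi>) has_derivative ((\<lambda>h. h *\<^sub>R N2 (\<phi> s) q) \<circ> (\<lambda>h. h * deriv \<phi> s))) (at s)"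
    by (rule diff_chain_at[OF a b])
  then show ?thesis by (simp add: o_def)
qed

lemma dPhi3:
  assumes x: "u \<in> U1" "q \<in> U2" "s \<in> I"
  shows "dPhi ((u, q), s) ((0, 0), h) = h *\<^sub>R (N1 s u, deriv \<phi> s *\<^sub>R N2 (\<phi> s) q)"
proof -
  have g: "((\<lambda>s'. ((u, q), s')) has_derivative (\<lambda>h. ((0, 0), h))) (at s)"
    by (auto intro!: derivative_eq_intros simp: zero_prod_def)
  have a: "((\<lambda>s'. f1 s' u) has_derivative (\<lambda>h. h *\<^sub>R N1 s u)) (at s)"
    using F1.par_vd[of u s] by (simp add: has_vector_derivative_def)
  have "((\<lambda>s'. Phi ((u, q), s')) has_derivative (\<lambda>h. h *\<^sub>R (N1 s u, deriv \<phi> s *\<^sub>R N2 (\<phi> s) q))) (at s)"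
    unfolding Phi_eq using has_derivative_Pair[OF a f2phi_deriv[OF x(3)]] by simp
  from slice_deriv[of Phi "\<lambda>s'. ((u, q), s')" s, OF _ g this] Phi_diff x show ?thesis by auto
qed

end

context sig begin

definition alpha where "alpha x = qform e1 (fst (\<nu> x)) (N1 (snd x) (fst (fst x)))"
definition beta where "beta x = qform e2 (snd (\<nu> x)) (N2 (\<phi> (snd x)) (snd (fst x)))"

lemma fac1:
  assumes x: "u \<in> U1" "q \<in> U2" "s \<in> I"
  shows "f1 s u \<in> Qspace e1" "linear (df1 s u)" "inj (df1 s u)"
    "\<And>w. df1 s u w \<in> Qtangent e1 (f1 s u)" "N1 s u \<in> Qtangent e1 (f1 s u)"
    "fst (\<nu> ((u, q), s)) \<in> Qtangent e1 (f1 s u)"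
    "\<And>w. qform e1 (fst (\<nu> ((u, q), s))) (df1 s u w) = 0"
proof -
  have xD: "((u, q), s) \<in> (U1 \<times> U2) \<times> I" using x by simp
  show "f1 s u \<in> Qspace e1" using Phi_in[OF xD] by (simp add: Phi_eq)
  show "linear (df1 s u)" by (rule has_derivative_linear[OF C1_on_diff[OF F1.par_C1 x(1)]])
  show "inj (df1 s u)"
  proof (rule injI)
    fix w w' assume "df1 s u w = df1 s u w'"
    then have "dPhi ((u, q), s) ((w, 0), 0) = dPhi ((u, q), s) ((w', 0), 0)"
      by (simp add: dPhi1[OF x])
    then have "((w, 0), 0) = ((w', 0) :: 'c1 \<times> 'c2, 0 :: real)" by (rule injD[OF dPhi_inj[OF xD]])
    then show "w = w'" by simp
  qed
  show "df1 s u w \<in> Qtangent e1 (f1 s u)" for w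
    using dPhi_tan[OF xD, of "((w, 0), 0)"] by (simp add: dPhi1[OF x] Ptangent_def Phi_eq)
  show "N1 s u \<in> Qtangent e1 (f1 s u)"
    using dPhi_tan[OF xD, of "((0, 0), 1)"] by (simp add: dPhi3[OF x] Ptangent_def Phi_eq)
  show "fst (\<nu> ((u, q), s)) \<in> Qtangent e1 (f1 s u)"
    using nu_tan[OF xD] by (simp add: Ptangent_def Phi_eq mem_Times_iff)
  show "qform e1 (fst (\<nu> ((u, q), s))) (df1 s u w) = 0" for w
    using nu_orth[OF xD, of "((w, 0), 0)"] by (simp add: dPhi1[OF x] pform_def qform_simps)
qed

lemma fac2:
  assumes x: "u \<in> U1" "q \<in> U2" "s \<in> I"
  shows "f2 (\<phi> s) q \<in> Qspace e2" "linear (df2 (\<phi> s) q)" "inj (df2 (\<phi> s) q)"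
    "\<And>w. df2 (\<phi> s) q w \<in> Qtangent e2 (f2 (\<phi> s) q)" "N2 (\<phi> s) q \<in> Qtangent e2 (f2 (\<phi> s) q)"
    "snd (\<nu> ((u, q), s)) \<in> Qtangent e2 (f2 (\<phi> s) q)"
    "\<And>w. qform e2 (snd (\<nu> ((u, q), s))) (df2 (\<phi> s) q w) = 0"
proof -
  have xD: "((u, q), s) \<in> (U1 \<times> U2) \<times> I" using x by simp
  show "f2 (\<phi> s) q \<in> Qspace e2" using Phi_in[OF xD] by (simp add: Phi_eq)
  show "linear (df2 (\<phi> s) q)" by (rule has_derivative_linear[OF C1_on_diff[OF F2.par_C1 x(2)]])
  show "inj (df2 (\<phi> s) q)"
  proof (rule injI)
    fix w w' assume "df2 (\<phi> s) q w = df2 (\<phi> s) q w'"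
    then have "dPhi ((u, q), s) ((0, w), 0) = dPhi ((u, q), s) ((0, w'), 0)"
      by (simp add: dPhi2[OF x])
    then have "((0, w), 0) = ((0, w') :: 'c1 \<times> 'c2, 0 :: real)" by (rule injD[OF dPhi_inj[OF xD]])
    then show "w = w'" by simp
  qed
  show "df2 (\<phi> s) q w \<in> Qtangent e2 (f2 (\<phi> s) q)" for w
    using dPhi_tan[OF xD, of "((0, w), 0)"] by (simp add: dPhi2[OF x] Ptangent_def Phi_eq)
  have "(N1 s u, deriv \<phi> s *\<^sub>R N2 (\<phi> s) q) \<in> Ptangent e1 e2 (Phi ((u, q), s))"
    using dPhi_tan[OF xD, of "((0, 0), 1)"] by (simp add: dPhi3[OF x])
  then have "deriv \<phi> s *\<^sub>R N2 (\<phi> s) q \<in> Qtangent e2 (f2 (\<phi> s) q)"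
    by (simp add: Ptangent_def Phi_eq)
  then have "(1 / deriv \<phi> s) *\<^sub>R (deriv \<phi> s *\<^sub>R N2 (\<phi> s) q) \<in> Qtangent e2 (f2 (\<phi> s) q)"
    by (rule subspace_scale[OF Qtangent_subspace])
  then show "N2 (\<phi> s) q \<in> Qtangent e2 (f2 (\<phi> s) q)" using phi_deriv_nz[OF x(3)] by simp
  show "snd (\<nu> ((u, q), s)) \<in> Qtangent e2 (f2 (\<phi> s) q)"
    using nu_tan[OF xD] by (simp add: Ptangent_def Phi_eq mem_Times_iff)
  show "qform e2 (snd (\<nu> ((u, q), s))) (df2 (\<phi> s) q w) = 0" for w
    using nu_orth[OF xD, of "((0, w), 0)"] by (simp add: dPhi2[OF x] pform_def qform_simps)
qed

lemma nu_decomp: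
  assumes x: "u \<in> U1" "q \<in> U2" "s \<in> I"
  shows "fst (\<nu> ((u, q), s)) = alpha ((u, q), s) *\<^sub>R N1 s u"
    "snd (\<nu> ((u, q), s)) = beta ((u, q), s) *\<^sub>R N2 (\<phi> s) q"
proof -
  have u: "u \<in> U1" and q: "q \<in> U2" using x by auto
  show "fst (\<nu> ((u, q), s)) = alpha ((u, q), s) *\<^sub>R N1 s u"
    unfolding alpha_def
    using orth_compl[OF dim1 fac1(1-3)[OF x] fac1(4)[OF x] fac1(5)[OF x] F1.N_unit[OF u] F1.N_orth[OF u]
        fac1(6)[OF x] fac1(7)[OF x]] by simp
  show "snd (\<nu> ((u, q), s)) = beta ((u, q), s) *\<^sub>R N2 (\<phi> s) q"
    unfolding beta_def
    using orth_compl[OF dim2 fac2(1-3)[OF x] fac2(4)[OF x] fac2(5)[OF x] F2.N_unit[OF q] F2.N_orth[OF q]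
        fac2(6)[OF x] fac2(7)[OF x]] by simp
qed

lemma ab_rel:
  assumes x: "u \<in> U1" "q \<in> U2" "s \<in> I"
  shows "alpha ((u, q), s) * alpha ((u, q), s) + beta ((u, q), s) * beta ((u, q), s) = 1"
    "alpha ((u, q), s) + deriv \<phi> s * beta ((u, q), s) = 0"
proof -
  have u: "u \<in> U1" and q: "q \<in> U2" using x by auto
  have xD: "((u, q), s) \<in> (U1 \<times> U2) \<times> I" using x by simp
  have nu: "\<nu> ((u, q), s) = (alpha ((u, q), s) *\<^sub>R N1 s u, beta ((u, q), s) *\<^sub>R N2 (\<phi> s) q)"
    using nu_decomp[OF x] by (metis prod.collapse)
  show "alpha ((u, q), s) * alpha ((u, q), s) + beta ((u, q), s) * beta ((u, q), s) = 1"
    using nu_unit[OF xD] unfolding nu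
    by (simp add: pform_pair qform_simps F1.N_unit[OF u] F2.N_unit[OF q])
  show "alpha ((u, q), s) + deriv \<phi> s * beta ((u, q), s) = 0"
    using nu_orth[OF xD, of "((0, 0), 1)"] unfolding nu dPhi3[OF x]
    by (simp add: pform_pair qform_simps F1.N_unit[OF u] F2.N_unit[OF q])
qed

end

context sig begin

lemma ab_sq:
  assumes x: "u \<in> U1" "q \<in> U2" "s \<in> I"
  shows "alpha ((u, q), s) \<noteq> 0" "beta ((u, q), s) \<noteq> 0"
    "alpha ((u, q), s) * alpha ((u, q), s) = (deriv \<phi> s)^2 / (1 + (deriv \<phi> s)^2)"
proof -
  let ?a = "alpha ((u, q), s)" and ?b = "beta ((u, q), s)" and ?d = "deriv \<phi> s"
  have r1: "?a * ?a + ?b * ?b = 1" and r2: "?a + ?d * ?b = 0" using ab_rel[OF x] by auto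
  have a: "?a = - ?d * ?b" using r2 by simp
  have "?b * ?b * (1 + ?d^2) = 1" using r1 unfolding a by (simp add: power2_eq_square algebra_simps)
  moreover have pos: "1 + ?d^2 > 0" by (simp add: add_pos_nonneg)
  moreover have "?b * ?b = (?b * ?b * (1 + ?d^2)) / (1 + ?d^2)" using pos by simp
  ultimately have bb: "?b * ?b = 1 / (1 + ?d^2)" by simp
  have dnz: "?d \<noteq> 0" using phi_deriv_nz[OF x(3)] .
  show "?b \<noteq> 0" using bb pos by auto
  then show "?a \<noteq> 0" using a dnz by simp
  show "?a * ?a = ?d^2 / (1 + ?d^2)" unfolding a using bb by (simp add: power2_eq_square field_simps)
qed

lemma alpha_cont:
  assumes s: "s \<in> I"
  shows "continuous_on (U1 \<times> U2) (\<lambda>y. alpha (y, s))"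
proof -
  have c1: "continuous_on (U1 \<times> U2) (\<lambda>y. fst (\<nu> (y, s)))"
  proof (rule continuous_on_compose2[of _ fst, OF continuous_on_fst])
    show "continuous_on (U1 \<times> U2) (\<lambda>y. \<nu> (y, s))"
      by (rule continuous_on_compose2[OF C1_on_cont[OF nu_C1]]) (use s in \<open>auto intro!: continuous_intros\<close>)
  qed auto
  have c2: "continuous_on (U1 \<times> U2) (\<lambda>y. N1 s (fst y))"
    by (rule continuous_on_compose2[OF C1_on_cont[OF F1.N_C1] continuous_on_fst]) auto
  show ?thesis unfolding alpha_def
    using bounded_bilinear.continuous_on[OF qform_bb c1 c2] by simp
qed

lemma alpha_const:
  assumes s: "s \<in> I" and y: "y \<in> U1 \<times> U2" and y': "y' \<in> U1 \<times> U2"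
  shows "alpha (y, s) = alpha (y', s)"
proof -
  let ?f = "\<lambda>y. alpha (y, s)"
  have sq: "?f y * ?f y = (deriv \<phi> s)^2 / (1 + (deriv \<phi> s)^2)" and nz: "?f y \<noteq> 0"
    if "y \<in> U1 \<times> U2" for y
    using ab_sq[of "fst (y)" "snd y" s] that s by (auto simp: mem_Times_iff)
  have "?f constant_on (U1 \<times> U2)"
  proof (rule continuous_discrete_range_constant)
    show "connected (U1 \<times> U2)" using F1.U_conn F2.U_conn by (rule connected_Times)
    show "continuous_on (U1 \<times> U2) ?f" by (rule alpha_cont[OF s])
    fix z assume z: "z \<in> U1 \<times> U2"
    show "\<exists>e>0. \<forall>y. y \<in> U1 \<times> U2 \<and> ?f y \<noteq> ?f z \<longrightarrow> e \<le> norm (?f y - ?f z)"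
    proof (intro exI[of _ "2 * \<bar>?f z\<bar>"] conjI allI impI)
      show "0 < 2 * \<bar>?f z\<bar>" using nz[OF z] by simp
      fix y assume h: "y \<in> U1 \<times> U2 \<and> ?f y \<noteq> ?f z"
      have "?f y * ?f y = ?f z * ?f z" using sq h z by simp
      then have "(?f y - ?f z) * (?f y + ?f z) = 0" by (simp add: algebra_simps)
      then have "?f y = - ?f z" using h by simp
      then show "2 * \<bar>?f z\<bar> \<le> norm (?f y - ?f z)" by simp
    qed
  qed
  then show ?thesis using y y' unfolding constant_on_def by metis
qed

definition u0 where "u0 = (SOME u. u \<in> U1)"
definition q0 where "q0 = (SOME q. q \<in> U2)"
definition a where "a s = alpha ((u0, q0), s)"
definition b where "b s = beta ((u0, q0), s)"

lemma u0: "u0 \<in> U1" unfolding u0_def using F1.U_ne by (simp add: some_in_eq)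
lemma q0: "q0 \<in> U2" unfolding q0_def using F2.U_ne by (simp add: some_in_eq)

lemma alpha_eq: "u \<in> U1 \<Longrightarrow> q \<in> U2 \<Longrightarrow> s \<in> I \<Longrightarrow> alpha ((u, q), s) = a s"
  unfolding a_def using alpha_const[of s "(u, q)" "(u0, q0)"] u0 q0 by simp

lemma beta_eq: "u \<in> U1 \<Longrightarrow> q \<in> U2 \<Longrightarrow> s \<in> I \<Longrightarrow> beta ((u, q), s) = b s"
proof -
  assume x: "u \<in> U1" "q \<in> U2" "s \<in> I"
  have d: "deriv \<phi> s \<noteq> 0" using phi_deriv_nz[OF x(3)] .
  have "beta ((u, q), s) = - alpha ((u, q), s) / deriv \<phi> s"
    using ab_rel(2)[OF x] d by (simp add: field_simps)
  also have "\<dots> = - alpha ((u0, q0), s) / deriv \<phi> s" using alpha_eq[OF x] alpha_eq[OF u0 q0 x(3)] by simp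
  also have "\<dots> = beta ((u0, q0), s)"
    using ab_rel(2)[OF u0 q0 x(3)] d by (simp add: field_simps)
  finally show ?thesis unfolding b_def .
qed

lemma a_nz: "s \<in> I \<Longrightarrow> a s \<noteq> 0" unfolding a_def using ab_sq(1)[OF u0 q0] by simp
lemma b_nz: "s \<in> I \<Longrightarrow> b s \<noteq> 0" unfolding b_def using ab_sq(2)[OF u0 q0] by simp

lemma nu_eq:
  assumes x: "u \<in> U1" "q \<in> U2" "s \<in> I"
  shows "\<nu> ((u, q), s) = (a s *\<^sub>R N1 s u, b s *\<^sub>R N2 (\<phi> s) q)"
  using nu_decomp[OF x] alpha_eq[OF x] beta_eq[OF x] by (metis prod.collapse)

end

context sig begin

lemma line_deriv: "((\<lambda>s'. ((u, q), s')) has_derivative (\<lambda>h. ((0, 0), h))) (at s)"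
  by (auto intro!: derivative_eq_intros simp: zero_prod_def)

lemma nu_line_deriv:
  assumes x: "u \<in> U1" "q \<in> U2" "s \<in> I"
  shows "((\<lambda>s'. \<nu> ((u, q), s')) has_derivative (\<lambda>h. dnu ((u, q), s) ((0, 0), h))) (at s)"
proof -
  have "(\<nu> has_derivative dnu ((u, q), s)) (at ((u, q), s))"
    using nu_diff[of "((u, q), s)"] x frechet_derivative_works by auto
  from diff_chain_at[OF line_deriv this] show ?thesis by (simp add: o_def)
qed

lemma N2phi_vd:
  assumes s: "s \<in> I"
  shows "((\<lambda>s'. N2 (\<phi> s') q) has_vector_derivative deriv \<phi> s *\<^sub>R ((- e2) *\<^sub>R f2 (\<phi> s) q)) (at s)"
proof -
  have "(\<phi> has_vector_derivative deriv \<phi> s) (at s)"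
    using phi_deriv[OF s] by (simp add: has_real_derivative_iff_has_vector_derivative)
  from vector_diff_chain_at[OF this F2.N_vd[of q "\<phi> s"]] show ?thesis by (simp add: o_def)
qed

lemma a_fun: "a = (\<lambda>s'. qform e1 (fst (\<nu> ((u0, q0), s'))) (N1 s' u0))"
  by (rule ext) (simp add: a_def alpha_def)
lemma b_fun: "b = (\<lambda>s'. qform e2 (snd (\<nu> ((u0, q0), s'))) (N2 (\<phi> s') q0))"
  by (rule ext) (simp add: b_def beta_def)

lemma a_deriv: assumes s: "s \<in> I" shows "(a has_real_derivative deriv a s) (at s)"
proof -
  have h1: "((\<lambda>s'. fst (\<nu> ((u0, q0), s'))) has_derivative (\<lambda>h. fst (dnu ((u0, q0), s) ((0, 0), h)))) (at s)"
    using has_derivative_fst[OF nu_line_deriv[OF u0 q0 s]] .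
  have h2: "((\<lambda>s'. N1 s' u0) has_derivative (\<lambda>h. h *\<^sub>R ((- e1) *\<^sub>R f1 s u0))) (at s)"
    using F1.N_vd[of u0 s] by (simp add: has_vector_derivative_def)
  have "a differentiable (at s)"
    unfolding a_fun differentiable_def using bounded_bilinear.FDERIV[OF qform_bb h1 h2] by blast
  then show ?thesis using DERIV_deriv_iff_real_differentiable by blast
qed

lemma b_deriv: assumes s: "s \<in> I" shows "(b has_real_derivative deriv b s) (at s)"
proof -
  have h1: "((\<lambda>s'. snd (\<nu> ((u0, q0), s'))) has_derivative (\<lambda>h. snd (dnu ((u0, q0), s) ((0, 0), h)))) (at s)"
    using has_derivative_snd[OF nu_line_deriv[OF u0 q0 s]] .
  have h2: "((\<lambda>s'. N2 (\<phi> s') q0) has_derivative (\<lambda>h. h *\<^sub>R (deriv \<phi> s *\<^sub>R ((- e2) *\<^sub>R f2 (\<phi> s) q0)))) (at s)"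
    using N2phi_vd[OF s, of q0] by (simp add: has_vector_derivative_def)
  have "b differentiable (at s)"
    unfolding b_fun differentiable_def using bounded_bilinear.FDERIV[OF qform_bb h1 h2] by blast
  then show ?thesis using DERIV_deriv_iff_real_differentiable by blast
qed

definition Tn where "Tn s = deriv a s + deriv \<phi> s * deriv b s"

lemma dnu3:
  assumes x: "u \<in> U1" "q \<in> U2" "s \<in> I"
  shows "dnu ((u, q), s) ((0, 0), h) = h *\<^sub>R
     (a s *\<^sub>R ((- e1) *\<^sub>R f1 s u) + deriv a s *\<^sub>R N1 s u,
      b s *\<^sub>R (deriv \<phi> s *\<^sub>R ((- e2) *\<^sub>R f2 (\<phi> s) q)) + deriv b s *\<^sub>R N2 (\<phi> s) q)"
proof -
  have v1: "((\<lambda>s'. a s' *\<^sub>R N1 s' u) has_vector_derivative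
      a s *\<^sub>R ((- e1) *\<^sub>R f1 s u) + deriv a s *\<^sub>R N1 s u) (at s)"
    by (rule has_vector_derivative_scaleR[OF a_deriv[OF x(3)] F1.N_vd])
  have v2: "((\<lambda>s'. b s' *\<^sub>R N2 (\<phi> s') q) has_vector_derivative
      b s *\<^sub>R (deriv \<phi> s *\<^sub>R ((- e2) *\<^sub>R f2 (\<phi> s) q)) + deriv b s *\<^sub>R N2 (\<phi> s) q) (at s)"
    by (rule has_vector_derivative_scaleR[OF b_deriv[OF x(3)] N2phi_vd[OF x(3)]])
  have d: "((\<lambda>s'. (a s' *\<^sub>R N1 s' u, b s' *\<^sub>R N2 (\<phi> s') q)) has_derivative (\<lambda>h. h *\<^sub>R
     (a s *\<^sub>R ((- e1) *\<^sub>R f1 s u) + deriv a s *\<^sub>R N1 s u,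
      b s *\<^sub>R (deriv \<phi> s *\<^sub>R ((- e2) *\<^sub>R f2 (\<phi> s) q)) + deriv b s *\<^sub>R N2 (\<phi> s) q))) (at s)"
    using has_derivative_Pair[OF v1[unfolded has_vector_derivative_def] v2[unfolded has_vector_derivative_def]]
    by simp
  have "((\<lambda>s'. \<nu> ((u, q), s')) has_derivative (\<lambda>h. h *\<^sub>R
     (a s *\<^sub>R ((- e1) *\<^sub>R f1 s u) + deriv a s *\<^sub>R N1 s u,
      b s *\<^sub>R (deriv \<phi> s *\<^sub>R ((- e2) *\<^sub>R f2 (\<phi> s) q)) + deriv b s *\<^sub>R N2 (\<phi> s) q))) (at s)"
    by (rule has_derivative_transform_within_open[OF d I x(3)]) (simp add: nu_eq x)
  from has_derivative_unique[OF nu_line_deriv[OF x] this] show ?thesis by metis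
qed

lemma eqf1: "u \<in> U1 \<Longrightarrow> q \<in> U2 \<Longrightarrow> s \<in> I \<Longrightarrow> e1 * qform e1 (f1 s u) (N1 s u) = 0"
  using fac1(5)[of u q s] by (cases "e1 = 0") (auto simp: Qtangent_def)
lemma eqf2: "u \<in> U1 \<Longrightarrow> q \<in> U2 \<Longrightarrow> s \<in> I \<Longrightarrow> e2 * qform e2 (f2 (\<phi> s) q) (N2 (\<phi> s) q) = 0"
  using fac2(5)[of u q s] by (cases "e2 = 0") (auto simp: Qtangent_def)

lemma T_eq:
  assumes x: "u \<in> U1" "q \<in> U2" "s \<in> I"
  shows "pform e1 e2 (dnu ((u, q), s) ((0, 0), h)) (dPhi ((u, q), s) ((0, 0), h)) = h * h * Tn s"
proof -
  have n1: "qform e1 (N1 s u) (N1 s u) = 1" using F1.N_unit x by blast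
  have n2: "qform e2 (N2 (\<phi> s) q) (N2 (\<phi> s) q) = 1" using F2.N_unit x by blast
  have z1: "e1 * qform e1 (f1 s u) (N1 s u) = 0" by (rule eqf1[OF x])
  have z2: "e2 * qform e2 (f2 (\<phi> s) q) (N2 (\<phi> s) q) = 0" by (rule eqf2[OF x])
  show ?thesis
    unfolding dnu3[OF x] dPhi3[OF x] Tn_def
    using n1 n2 z1 z2 by (cases "e1 = 0"; cases "e2 = 0") (simp_all add: pform_def qform_simps algebra_simps)
qed

end

lemma sum_Basis_prod_real:
  fixes f :: "('a::euclidean_space \<times> 'b::euclidean_space) \<Rightarrow> real"
  shows "sum f Basis = sum (\<lambda>i. f (i, 0)) Basis + sum (\<lambda>i. f (0, i)) Basis"
proof -
  have "inj_on (\<lambda>u. (u::'a, 0::'b)) Basis" "inj_on (\<lambda>u. (0::'a, u::'b)) Basis"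
    by (auto intro!: inj_onI Pair_inject)
  thus ?thesis
    unfolding Basis_prod_def
    by (subst sum.union_disjoint) (auto simp: Basis_prod_def sum.reindex)
qed

lemma mean_curv_some:
  fixes F :: "'a::euclidean_space \<Rightarrow> 'e::euclidean_space"
  assumes ex: "\<exists>W :: 'a \<Rightarrow> 'a. \<forall>b\<in>(Basis :: 'a set). \<forall>b'\<in>Basis.
      g (frechet_derivative F (at u) (W b)) (frechet_derivative F (at u) (W b')) = (if b = b' then 1 else 0)"
  defines "W0 \<equiv> (SOME W :: 'a \<Rightarrow> 'a. \<forall>b\<in>(Basis :: 'a set). \<forall>b'\<in>Basis.
      g (frechet_derivative F (at u) (W b)) (frechet_derivative F (at u) (W b')) = (if b = b' then 1 else 0))"
  shows "\<forall>b\<in>(Basis :: 'a set). \<forall>b'\<in>Basis.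
      g (frechet_derivative F (at u) (W0 b)) (frechet_derivative F (at u) (W0 b')) = (if b = b' then 1 else 0)"
    and "mean_curv g F \<nu> u = - (\<Sum>b\<in>Basis. g (frechet_derivative \<nu> (at u) (W0 b)) (frechet_derivative F (at u) (W0 b)))"
proof -
  show "\<forall>b\<in>(Basis :: 'a set). \<forall>b'\<in>Basis.
      g (frechet_derivative F (at u) (W0 b)) (frechet_derivative F (at u) (W0 b')) = (if b = b' then 1 else 0)"
    unfolding W0_def using someI_ex[OF ex] .
  show "mean_curv g F \<nu> u = - (\<Sum>b\<in>Basis. g (frechet_derivative \<nu> (at u) (W0 b)) (frechet_derivative F (at u) (W0 b)))"
    unfolding mean_curv_def W0_def Let_def ..
qed

lemma mean_curv_any_frame:
  fixes F \<nu> :: "'a::euclidean_space \<Rightarrow> 'e::euclidean_space"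
  assumes bil: "bilinear g" and sym: "\<And>x y. g x y = g y x"
    and lF: "linear (frechet_derivative F (at u))" and ln: "linear (frechet_derivative \<nu> (at u))"
    and W': "\<forall>b\<in>(Basis :: 'a set). \<forall>b'\<in>Basis.
      g (frechet_derivative F (at u) (W' b)) (frechet_derivative F (at u) (W' b')) = (if b = b' then 1 else 0)"
  shows "mean_curv g F \<nu> u = - (\<Sum>b\<in>Basis. g (frechet_derivative \<nu> (at u) (W' b)) (frechet_derivative F (at u) (W' b)))"
proof -
  let ?dF = "frechet_derivative F (at u)" and ?dn = "frechet_derivative \<nu> (at u)"
  let ?W0 = "(SOME W :: 'a \<Rightarrow> 'a. \<forall>b\<in>(Basis :: 'a set). \<forall>b'\<in>Basis.
      g (?dF (W b)) (?dF (W b')) = (if b = b' then 1 else 0))"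
  have ex: "\<exists>W :: 'a \<Rightarrow> 'a. \<forall>b\<in>(Basis :: 'a set). \<forall>b'\<in>Basis. g (?dF (W b)) (?dF (W b')) = (if b = b' then 1 else 0)"
    using W' by blast
  have gl: "linear (\<lambda>x. g x y)" "linear (\<lambda>y. g x y)" for x y using bil unfolding bilinear_def by auto
  have bG: "bilinear (\<lambda>x y. g (?dF x) (?dF y))"
    unfolding bilinear_def using linear_compose[OF lF gl(1)] linear_compose[OF lF gl(2)] by (auto simp: o_def)
  have bB: "bilinear (\<lambda>x y. g (?dn x) (?dF y))"
    unfolding bilinear_def using linear_compose[OF ln gl(1)] linear_compose[OF lF gl(2)] by (auto simp: o_def)
  have "(\<Sum>b\<in>Basis. g (?dn (?W0 b)) (?dF (?W0 b))) = (\<Sum>b\<in>Basis. g (?dn (W' b)) (?dF (W' b)))"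
    by (rule trace_invariant[OF bG _ bB mean_curv_some(1)[OF ex] W']) (simp add: sym)
  then show ?thesis using mean_curv_some(2)[OF ex] by simp
qed

context sig begin

abbreviation "dN1 s u \<equiv> frechet_derivative (N1 s) (at u)"
abbreviation "dN2 t q \<equiv> frechet_derivative (N2 t) (at q)"

lemma dnu1:
  assumes x: "u \<in> U1" "q \<in> U2" "s \<in> I"
  shows "dnu ((u, q), s) ((w, 0), 0) = (a s *\<^sub>R dN1 s u w, 0)"
proof -
  have g: "((\<lambda>u'. ((u', q), s)) has_derivative (\<lambda>w. ((w, 0), 0))) (at u)"
    by (auto intro!: derivative_eq_intros simp: zero_prod_def)
  have d: "((\<lambda>u'. (a s *\<^sub>R N1 s u', b s *\<^sub>R N2 (\<phi> s) q)) has_derivative (\<lambda>w. (a s *\<^sub>R dN1 s u w, 0))) (at u)"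
    using C1_on_diff[OF F1.N_C1 x(1)] by (auto intro!: derivative_eq_intros)
  have "((\<lambda>u'. \<nu> ((u', q), s)) has_derivative (\<lambda>w. (a s *\<^sub>R dN1 s u w, 0))) (at u)"
    by (rule has_derivative_transform_within_open[OF d F1.U_open x(1)]) (simp add: nu_eq x)
  from slice_deriv[of \<nu> "\<lambda>u'. ((u', q), s)" u, OF _ g this] nu_diff x show ?thesis by auto
qed

lemma dnu2:
  assumes x: "u \<in> U1" "q \<in> U2" "s \<in> I"
  shows "dnu ((u, q), s) ((0, w), 0) = (0, b s *\<^sub>R dN2 (\<phi> s) q w)"
proof -
  have g: "((\<lambda>q'. ((u, q'), s)) has_derivative (\<lambda>w. ((0, w), 0))) (at q)"
    by (auto intro!: derivative_eq_intros simp: zero_prod_def)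
  have d: "((\<lambda>q'. (a s *\<^sub>R N1 s u, b s *\<^sub>R N2 (\<phi> s) q')) has_derivative (\<lambda>w. (0, b s *\<^sub>R dN2 (\<phi> s) q w))) (at q)"
    using C1_on_diff[OF F2.N_C1 x(2)] by (auto intro!: derivative_eq_intros)
  have "((\<lambda>q'. \<nu> ((u, q'), s)) has_derivative (\<lambda>w. (0, b s *\<^sub>R dN2 (\<phi> s) q w))) (at q)"
    by (rule has_derivative_transform_within_open[OF d F2.U_open x(2)]) (simp add: nu_eq x)
  from slice_deriv[of \<nu> "\<lambda>q'. ((u, q'), s)" q, OF _ g this] nu_diff x show ?thesis by auto
qed

lemma dPhi_lin: "x \<in> (U1 \<times> U2) \<times> I \<Longrightarrow> linear (dPhi x)"
  using Phi_diff frechet_derivative_works has_derivative_linear by blast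
lemma dnu_lin: "x \<in> (U1 \<times> U2) \<times> I \<Longrightarrow> linear (dnu x)"
  using nu_diff frechet_derivative_works has_derivative_linear by blast

lemma dPhi_gen:
  assumes x: "u \<in> U1" "q \<in> U2" "s \<in> I"
  shows "dPhi ((u, q), s) ((v1, v2), h) =
    (df1 s u v1 + h *\<^sub>R N1 s u, df2 (\<phi> s) q v2 + (h * deriv \<phi> s) *\<^sub>R N2 (\<phi> s) q)"
proof -
  have xD: "((u, q), s) \<in> (U1 \<times> U2) \<times> I" using x by simp
  have "((v1, v2), h) = ((v1, 0), 0) + ((0, v2), 0) + ((0, 0), h)" by simp
  then have "dPhi ((u, q), s) ((v1, v2), h) = dPhi ((u, q), s) ((v1, 0), 0) + dPhi ((u, q), s) ((0, v2), 0)
      + dPhi ((u, q), s) ((0, 0), h)"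
    by (metis linear_add[OF dPhi_lin[OF xD]])
  then show ?thesis by (simp add: dPhi1[OF x] dPhi2[OF x] dPhi3[OF x])
qed

lemma G_gen:
  assumes x: "u \<in> U1" "q \<in> U2" "s \<in> I"
  shows "pform e1 e2 (dPhi ((u, q), s) ((v1, v2), h)) (dPhi ((u, q), s) ((w1, w2), k)) =
    qform e1 (df1 s u v1) (df1 s u w1) + qform e2 (df2 (\<phi> s) q v2) (df2 (\<phi> s) q w2)
    + h * k * (1 + (deriv \<phi> s)^2)"
proof -
  have u: "u \<in> U1" and q: "q \<in> U2" using x by auto
  have o1: "qform e1 (df1 s u v) (N1 s u) = 0" for v
    using F1.N_orth[OF u] qform_sym by metis
  have o2: "qform e2 (df2 (\<phi> s) q v) (N2 (\<phi> s) q) = 0" for v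
    using F2.N_orth[OF q] qform_sym by metis
  show ?thesis
    unfolding dPhi_gen[OF x] pform_pair
    by (simp add: qform_simps o1 o2 F1.N_orth[OF u] F2.N_orth[OF q] F1.N_unit[OF u] F2.N_unit[OF q]
          power2_eq_square algebra_simps)
qed

end

lemma Basis3:
  "(z \<in> (Basis :: (('a::euclidean_space \<times> 'b::euclidean_space) \<times> real) set)) \<longleftrightarrow>
   (\<exists>b\<in>Basis. z = ((b, 0), 0)) \<or> (\<exists>b\<in>Basis. z = ((0, b), 0)) \<or> z = ((0, 0), 1)"
  by (auto simp: Basis_prod_def Basis_real_def zero_prod_def)

context sig begin

definition W1 where "W1 s u = (SOME W :: 'c1 \<Rightarrow> 'c1. \<forall>b\<in>(Basis :: 'c1 set). \<forall>b'\<in>Basis.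
      qform e1 (df1 s u (W b)) (df1 s u (W b')) = (if b = b' then 1 else 0))"
definition W2 where "W2 t q = (SOME W :: 'c2 \<Rightarrow> 'c2. \<forall>b\<in>(Basis :: 'c2 set). \<forall>b'\<in>Basis.
      qform e2 (df2 t q (W b)) (df2 t q (W b')) = (if b = b' then 1 else 0))"

lemma ex_frame1: "u \<in> U1 \<Longrightarrow> q \<in> U2 \<Longrightarrow> s \<in> I \<Longrightarrow> \<exists>W :: 'c1 \<Rightarrow> 'c1. \<forall>b\<in>(Basis :: 'c1 set). \<forall>b'\<in>Basis.
      qform e1 (df1 s u (W b)) (df1 s u (W b')) = (if b = b' then 1 else 0)"
  by (rule frame_exists_imm[OF fac1(1-3) fac1(4)])
lemma ex_frame2: "u \<in> U1 \<Longrightarrow> q \<in> U2 \<Longrightarrow> s \<in> I \<Longrightarrow> \<exists>W :: 'c2 \<Rightarrow> 'c2. \<forall>b\<in>(Basis :: 'c2 set). \<forall>b'\<in>Basis.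
      qform e2 (df2 (\<phi> s) q (W b)) (df2 (\<phi> s) q (W b')) = (if b = b' then 1 else 0)"
  by (rule frame_exists_imm[OF fac2(1-3) fac2(4)])

lemma W1_on: "u \<in> U1 \<Longrightarrow> q \<in> U2 \<Longrightarrow> s \<in> I \<Longrightarrow> i \<in> Basis \<Longrightarrow> i' \<in> Basis \<Longrightarrow>
   qform e1 (df1 s u (W1 s u i)) (df1 s u (W1 s u i')) = (if i = i' then 1 else 0)"
  using mean_curv_some(1)[OF ex_frame1] unfolding W1_def by blast
lemma W2_on: "u \<in> U1 \<Longrightarrow> q \<in> U2 \<Longrightarrow> s \<in> I \<Longrightarrow> i \<in> Basis \<Longrightarrow> i' \<in> Basis \<Longrightarrow>
   qform e2 (df2 (\<phi> s) q (W2 (\<phi> s) q i)) (df2 (\<phi> s) q (W2 (\<phi> s) q i')) = (if i = i' then 1 else 0)"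
  using mean_curv_some(1)[OF ex_frame2] unfolding W2_def by blast

lemma H1_eq: "u \<in> U1 \<Longrightarrow> q \<in> U2 \<Longrightarrow> s \<in> I \<Longrightarrow> mean_curv (qform e1) (f1 s) (N1 s) u =
   - (\<Sum>b\<in>Basis. qform e1 (dN1 s u (W1 s u b)) (df1 s u (W1 s u b)))"
  using mean_curv_some(2)[OF ex_frame1] unfolding W1_def by blast
lemma H2_eq: "u \<in> U1 \<Longrightarrow> q \<in> U2 \<Longrightarrow> s \<in> I \<Longrightarrow> mean_curv (qform e2) (f2 (\<phi> s)) (N2 (\<phi> s)) q =
   - (\<Sum>b\<in>Basis. qform e2 (dN2 (\<phi> s) q (W2 (\<phi> s) q b)) (df2 (\<phi> s) q (W2 (\<phi> s) q b)))"
  using mean_curv_some(2)[OF ex_frame2] unfolding W2_def by blast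

definition Wn where "Wn s = sqrt (1 + (deriv \<phi> s)^2)"

definition WS where "WS s u q z =
  ((if fst (fst z) \<in> Basis then W1 s u (fst (fst z)) else 0,
    if snd (fst z) \<in> Basis then W2 (\<phi> s) q (snd (fst z)) else 0), snd z / Wn s)"

lemma Wn_sq: "Wn s * Wn s = 1 + (deriv \<phi> s)^2" and Wn_pos: "Wn s > 0"
  unfolding Wn_def by (simp_all add: add_pos_nonneg)

lemma WS_on:
  assumes x: "u \<in> U1" "q \<in> U2" "s \<in> I"
  shows "\<forall>z\<in>Basis. \<forall>z'\<in>Basis. pform e1 e2 (dPhi ((u, q), s) (WS s u q z)) (dPhi ((u, q), s) (WS s u q z'))
     = (if z = z' then 1 else 0)"
proof (intro ballI)
  fix z z' :: "('c1 \<times> 'c2) \<times> real" assume z: "z \<in> Basis" and z': "z' \<in> Basis"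
  let ?w1 = "\<lambda>z::('c1 \<times> 'c2) \<times> real. if fst (fst z) \<in> Basis then W1 s u (fst (fst z)) else 0"
  let ?w2 = "\<lambda>z::('c1 \<times> 'c2) \<times> real. if snd (fst z) \<in> Basis then W2 (\<phi> s) q (snd (fst z)) else 0"
  have l1: "df1 s u 0 = 0" using linear_0[OF fac1(2)[OF x]] .
  have l2: "df2 (\<phi> s) q 0 = 0" using linear_0[OF fac2(2)[OF x]] .
  have g1: "qform e1 (df1 s u (?w1 z)) (df1 s u (?w1 z')) =
     (if fst (fst z) \<in> Basis \<and> fst (fst z') \<in> Basis then (if fst (fst z) = fst (fst z') then 1 else 0) else 0)"
    using W1_on[OF x] l1 by (auto simp: qform_simps)
  have g2: "qform e2 (df2 (\<phi> s) q (?w2 z)) (df2 (\<phi> s) q (?w2 z')) =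
     (if snd (fst z) \<in> Basis \<and> snd (fst z') \<in> Basis then (if snd (fst z) = snd (fst z') then 1 else 0) else 0)"
    using W2_on[OF x] l2 by (auto simp: qform_simps)
  have g3: "snd z / Wn s * (snd z' / Wn s) * (1 + (deriv \<phi> s)^2) = snd z * snd z'"
  proof -
    have h: "1 + (deriv \<phi> s)^2 = Wn s * Wn s" using Wn_sq[of s] by simp
    have "Wn s \<noteq> 0" using Wn_pos[of s] by simp
    then show ?thesis unfolding h by (simp add: field_simps)
  qed
  have "pform e1 e2 (dPhi ((u, q), s) (WS s u q z)) (dPhi ((u, q), s) (WS s u q z'))
     = qform e1 (df1 s u (?w1 z)) (df1 s u (?w1 z')) + qform e2 (df2 (\<phi> s) q (?w2 z)) (df2 (\<phi> s) q (?w2 z'))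
       + snd z * snd z'"
    unfolding WS_def G_gen[OF x] g3 ..
  also have "\<dots> = (if z = z' then 1 else 0)"
    unfolding g1 g2 using z z' unfolding Basis3 by (auto simp: nonzero_Basis)
  finally show "pform e1 e2 (dPhi ((u, q), s) (WS s u q z)) (dPhi ((u, q), s) (WS s u q z')) = (if z = z' then 1 else 0)" .
qed

lemma HS_formula:
  assumes x: "u \<in> U1" "q \<in> U2" "s \<in> I"
  shows "mean_curv (pform e1 e2) Phi \<nu> ((u, q), s) =
    a s * mean_curv (qform e1) (f1 s) (N1 s) u + b s * mean_curv (qform e2) (f2 (\<phi> s)) (N2 (\<phi> s)) q
    - Tn s / (1 + (deriv \<phi> s)^2)"
proof -
  have xD: "((u, q), s) \<in> (U1 \<times> U2) \<times> I" using x by simp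
  let ?B = "\<lambda>z. pform e1 e2 (dnu ((u, q), s) (WS s u q z)) (dPhi ((u, q), s) (WS s u q z))"
  have mc: "mean_curv (pform e1 e2) Phi \<nu> ((u, q), s) = - (\<Sum>z\<in>Basis. ?B z)"
    by (rule mean_curv_any_frame[OF pform_bilinear pform_sym dPhi_lin[OF xD] dnu_lin[OF xD] WS_on[OF x]])
  have split: "(\<Sum>z\<in>Basis. ?B z) = (\<Sum>i\<in>Basis. ?B ((i, 0), 0)) + (\<Sum>i\<in>Basis. ?B ((0, i), 0)) + ?B ((0, 0), 1)"
    by (simp add: sum_Basis_prod_real Basis_real_def zero_prod_def)
  have t1: "?B ((i, 0), 0) = a s * qform e1 (dN1 s u (W1 s u i)) (df1 s u (W1 s u i))" if "i \<in> Basis" for i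
    using that by (simp add: WS_def nonzero_Basis dnu1[OF x] dPhi1[OF x] pform_pair qform_simps)
  have t2: "?B ((0, i), 0) = b s * qform e2 (dN2 (\<phi> s) q (W2 (\<phi> s) q i)) (df2 (\<phi> s) q (W2 (\<phi> s) q i))"
    if "i \<in> Basis" for i
    using that by (simp add: WS_def nonzero_Basis dnu2[OF x] dPhi2[OF x] pform_pair qform_simps)
  have t3: "?B ((0, 0), 1) = Tn s / (1 + (deriv \<phi> s)^2)"
  proof -
    have "?B ((0, 0), 1) = (1 / Wn s) * (1 / Wn s) * Tn s"
      using T_eq[OF x, of "1 / Wn s"] by (simp add: WS_def nonzero_Basis)
    also have "\<dots> = Tn s / (1 + (deriv \<phi> s)^2)" using Wn_sq[of s] Wn_pos[of s] by (simp add: field_simps)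
    finally show ?thesis .
  qed
  have "(\<Sum>z\<in>Basis. ?B z) = a s * (\<Sum>i\<in>Basis. qform e1 (dN1 s u (W1 s u i)) (df1 s u (W1 s u i)))
      + b s * (\<Sum>i\<in>Basis. qform e2 (dN2 (\<phi> s) q (W2 (\<phi> s) q i)) (df2 (\<phi> s) q (W2 (\<phi> s) q i)))
      + Tn s / (1 + (deriv \<phi> s)^2)"
    unfolding split t3 by (simp add: t1 t2 sum_distrib_left)
  then show ?thesis unfolding mc H1_eq[OF x] H2_eq[OF x] by simp
qed

end

context sig begin

lemma hs1: assumes s: "s \<in> I" shows "hypersurface (qform e1) (Qspace e1) (Qtangent e1) (f1 s) (N1 s) U1"
  unfolding hypersurface_def
proof (intro conjI ballI allI)
  show "open U1" "connected U1" "U1 \<noteq> {}" using F1.U_open F1.U_conn F1.U_ne by auto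
  show "C1_on U1 (f1 s)" by (rule F1.par_C1)
  show "C1_on U1 (N1 s)" by (rule F1.N_C1)
  fix u assume u: "u \<in> U1"
  note x = u q0 s
  show "f1 s u \<in> Qspace e1" by (rule fac1(1)[OF x])
  show "inj (df1 s u)" by (rule fac1(3)[OF x])
  show "df1 s u w \<in> Qtangent e1 (f1 s u)" for w by (rule fac1(4)[OF x])
  show "N1 s u \<in> Qtangent e1 (f1 s u)" by (rule fac1(5)[OF x])
  show "qform e1 (N1 s u) (N1 s u) = 1" by (rule F1.N_unit[OF u])
  show "qform e1 (N1 s u) (df1 s u w) = 0" for w by (rule F1.N_orth[OF u])
qed

lemma hs2: assumes s: "s \<in> I" shows "hypersurface (qform e2) (Qspace e2) (Qtangent e2) (f2 (\<phi> s)) (N2 (\<phi> s)) U2"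
  unfolding hypersurface_def
proof (intro conjI ballI allI)
  show "open U2" "connected U2" "U2 \<noteq> {}" using F2.U_open F2.U_conn F2.U_ne by auto
  show "C1_on U2 (f2 (\<phi> s))" by (rule F2.par_C1)
  show "C1_on U2 (N2 (\<phi> s))" by (rule F2.N_C1)
  fix q assume q: "q \<in> U2"
  note x = u0 q s
  show "f2 (\<phi> s) q \<in> Qspace e2" by (rule fac2(1)[OF x])
  show "inj (df2 (\<phi> s) q)" by (rule fac2(3)[OF x])
  show "df2 (\<phi> s) q w \<in> Qtangent e2 (f2 (\<phi> s) q)" for w by (rule fac2(4)[OF x])
  show "N2 (\<phi> s) q \<in> Qtangent e2 (f2 (\<phi> s) q)" by (rule fac2(5)[OF x])
  show "qform e2 (N2 (\<phi> s) q) (N2 (\<phi> s) q) = 1" by (rule F2.N_unit[OF q])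
  show "qform e2 (N2 (\<phi> s) q) (df2 (\<phi> s) q w) = 0" for w by (rule F2.N_orth[OF q])
qed

lemma cmc1: assumes s: "s \<in> I" shows "cmc (qform e1) (Qspace e1) (Qtangent e1) (f1 s) U1"
  unfolding cmc_def
proof (intro exI conjI)
  show "hypersurface (qform e1) (Qspace e1) (Qtangent e1) (f1 s) (N1 s) U1" by (rule hs1[OF s])
  show "\<forall>u\<in>U1. mean_curv (qform e1) (f1 s) (N1 s) u = mean_curv (qform e1) (f1 s) (N1 s) u0"
  proof
    fix u assume u: "u \<in> U1"
    have "c = a s * mean_curv (qform e1) (f1 s) (N1 s) u + b s * mean_curv (qform e2) (f2 (\<phi> s)) (N2 (\<phi> s)) q0
      - Tn s / (1 + (deriv \<phi> s)^2)"
      using Hc[of "((u, q0), s)"] HS_formula[OF u q0 s] u q0 s by simp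
    moreover have "c = a s * mean_curv (qform e1) (f1 s) (N1 s) u0 + b s * mean_curv (qform e2) (f2 (\<phi> s)) (N2 (\<phi> s)) q0
      - Tn s / (1 + (deriv \<phi> s)^2)"
      using Hc[of "((u0, q0), s)"] HS_formula[OF u0 q0 s] u0 q0 s by simp
    ultimately have "a s * mean_curv (qform e1) (f1 s) (N1 s) u = a s * mean_curv (qform e1) (f1 s) (N1 s) u0"
      by linarith
    then show "mean_curv (qform e1) (f1 s) (N1 s) u = mean_curv (qform e1) (f1 s) (N1 s) u0"
      using a_nz[OF s] mult_left_cancel by blast
  qed
qed

lemma cmc2: assumes s: "s \<in> I" shows "cmc (qform e2) (Qspace e2) (Qtangent e2) (f2 (\<phi> s)) U2"
  unfolding cmc_def
proof (intro exI conjI)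
  show "hypersurface (qform e2) (Qspace e2) (Qtangent e2) (f2 (\<phi> s)) (N2 (\<phi> s)) U2" by (rule hs2[OF s])
  show "\<forall>q\<in>U2. mean_curv (qform e2) (f2 (\<phi> s)) (N2 (\<phi> s)) q = mean_curv (qform e2) (f2 (\<phi> s)) (N2 (\<phi> s)) q0"
  proof
    fix q assume q: "q \<in> U2"
    have "c = a s * mean_curv (qform e1) (f1 s) (N1 s) u0 + b s * mean_curv (qform e2) (f2 (\<phi> s)) (N2 (\<phi> s)) q
      - Tn s / (1 + (deriv \<phi> s)^2)"
      using Hc[of "((u0, q), s)"] HS_formula[OF u0 q s] u0 q s by simp
    moreover have "c = a s * mean_curv (qform e1) (f1 s) (N1 s) u0 + b s * mean_curv (qform e2) (f2 (\<phi> s)) (N2 (\<phi> s)) q0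
      - Tn s / (1 + (deriv \<phi> s)^2)"
      using Hc[of "((u0, q0), s)"] HS_formula[OF u0 q0 s] u0 q0 s by simp
    ultimately have "b s * mean_curv (qform e2) (f2 (\<phi> s)) (N2 (\<phi> s)) q = b s * mean_curv (qform e2) (f2 (\<phi> s)) (N2 (\<phi> s)) q0"
      by linarith
    then show "mean_curv (qform e2) (f2 (\<phi> s)) (N2 (\<phi> s)) q = mean_curv (qform e2) (f2 (\<phi> s)) (N2 (\<phi> s)) q0"
      using b_nz[OF s] mult_left_cancel by blast
  qed
qed

end

theorem lemma2:
  fixes e1 e2 :: real
    and X1 \<eta>1 :: "'c1::euclidean_space \<Rightarrow> 'b1::euclidean_space \<times> real"
    and X2 \<eta>2 :: "'c2::euclidean_space \<Rightarrow> 'b2::euclidean_space \<times> real"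
    and U1 :: "'c1 set" and U2 :: "'c2 set" and I :: "real set" and \<phi> :: "real \<Rightarrow> real"
  assumes dim1: "DIM('b1) \<ge> 2" "DIM('c1) + 1 = DIM('b1)"
    and dim2: "DIM('b2) \<ge> 2" "DIM('c2) + 1 = DIM('b2)"
    and M1: "hypersurface (qform e1) (Qspace e1) (Qtangent e1) X1 \<eta>1 U1"
    and M2: "hypersurface (qform e2) (Qspace e2) (Qtangent e2) X2 \<eta>2 U2"
    and I: "is_interval I" "open I" "I \<noteq> {}"
    and phi: "diffeo_on I \<phi>"
    and Sigma: "cmc (pform e1 e2) (Qspace e1 \<times> Qspace e2) (Ptangent e1 e2)
                  (fphi_map e1 e2 X1 \<eta>1 X2 \<eta>2 \<phi>) ((U1 \<times> U2) \<times> I)"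
  shows "\<forall>s\<in>I. cmc (qform e1) (Qspace e1) (Qtangent e1) (parallel e1 X1 \<eta>1 s) U1 \<and>
               cmc (qform e2) (Qspace e2) (Qtangent e2) (parallel e2 X2 \<eta>2 (\<phi> s)) U2"
proof -
  obtain \<nu> c where hs: "hypersurface (pform e1 e2) (Qspace e1 \<times> Qspace e2) (Ptangent e1 e2)
                  (fphi_map e1 e2 X1 \<eta>1 X2 \<eta>2 \<phi>) \<nu> ((U1 \<times> U2) \<times> I)"
    and H: "\<forall>x\<in>(U1 \<times> U2) \<times> I. mean_curv (pform e1 e2) (fphi_map e1 e2 X1 \<eta>1 X2 \<eta>2 \<phi>) \<nu> x = c"
    using Sigma unfolding cmc_def by blast
  have S: "sig e1 X1 \<eta>1 U1 e2 X2 \<eta>2 U2 I \<phi> \<nu> c"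
    by (intro sig.intro factor.intro sig_axioms.intro M1 M2 dim1(2) dim2(2) I(2) phi hs)
       (use H in blast)
  show ?thesis using sig.cmc1[OF S] sig.cmc2[OF S] by blast
qed

end
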